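(* There exist a universal constant $r_0>0$ and a nonpositive Lipschitz function $h:Q_1\to\mathbb R$, which is $C^2$ with respect to $x$ on the set where $h$ is negative, such that for every $r\le r_0$, with $\tilde\phi=\Lambda_0\, r\,\eta(1/r)\,\phi$, the function $h$ solves in the viscosity sense \[ P^+(D^2h)-h_t+\tilde{\phi}(|Dh|)\leq g \quad\text{in } Q_1 \] for some continuous bounded function $g:Q_1\to\mathbb R$ with $\operatorname{supp} g\subset K_1$. Moreover $h\le -2$ in $K_3$ and $h=0$ on $\partial_pQ_1$.
   Context: Let $n\ge 1$ and $0<\lambda\le\Lambda$. For a real symmetric $n\times n$ matrix $M$ with eigenvalues $e_i$, $P^+(M)=\Lambda\sum_{e_i>0}e_i+\lambda\sum_{e_i<0}e_i$. The function $\phi:[0,\infty)\to[0,\infty)$ has the form $\phi(t)=\eta(t)t$ where: (P1) $\phi$ is increasing, locally Lipschitz on $(0,\infty)$, $\phi(t)\ge t$; $\eta:[0,\infty)\to[1,\infty)$ is nonincreasing on $(0,1)$ and nondecreasing on $[1,\infty)$; (P2) $\lim_{t\to\infty}\frac{t\eta'(t)}{\eta(t)}\log\eta(t)=0$; (P3) there is a constant $\Lambda_0$ with $\eta(st)\le\Lambda_0\eta(s)\eta(t)$ for all $s,t>0$. Universal constants depend only on $n,\lambda,\Lambda,\phi$. For $x\in\mathbb R^n$, $|x|_\infty=\max_i|x_i|$; $Q_1=\{|x|_\infty<1\}\times(-1,0)$, and its parabolic boundary is $\partial_pQ_1=\{|x|_\infty<1\}\times\{-1\}\cup\{|x|_\infty=1\}\times[-1,0]$.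 With $c_n=(10n)^{-1}$: $K_1=(-c_n,c_n)^n\times(-1,-1+c_n^2)$ and $K_3=(-3c_n,3c_n)^n\times(-1+c_n^2,0)$. "$h$ solves $P^+(D^2h)-h_t+\tilde\phi(|Dh|)\le g$ in the viscosity sense" means: whenever $\theta\in C^2$ satisfies $\theta\le h$ near $(x_0,t_0)\in Q_1$ with equality at $(x_0,t_0)$, then $P^+(D^2\theta)-\theta_t+\tilde\phi(|D\theta|)\le g$ at $(x_0,t_0)$. *)

theory Defs
  imports "HOL-Analysis.Analysis" "HOL-Computational_Algebra.Polynomial"
begin

definition linf :: "real^'n \<Rightarrow> real" where
  "linf x = Max (range (\<lambda>i. \<bar>x $ i\<bar>))"

definition Q1 :: "((real^'n) \<times> real) set" where
  "Q1 = {(x,t). linf x < 1 \<and> -1 < t \<and> t < 0}"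

definition parab_bdry :: "((real^'n) \<times> real) set" where
  "parab_bdry = {(x,t). linf x < 1 \<and> t = -1} \<union> {(x,t). linf x = 1 \<and> -1 \<le> t \<and> t \<le> 0}"

definition cn :: "'n::finite itself \<Rightarrow> real" where
  "cn _ = 1 / (10 * real CARD('n))"

definition K1 :: "((real^'n) \<times> real) set" where
  "K1 = {(x,t). (\<forall>i. -cn TYPE('n) < x $ i \<and> x $ i < cn TYPE('n))
               \<and> -1 < t \<and> t < -1 + (cn TYPE('n))^2}"

definition K3 :: "((real^'n) \<times> real) set" where
  "K3 = {(x,t). (\<forall>i. -3 * cn TYPE('n) < x $ i \<and> x $ i < 3 * cn TYPE('n))
               \<and> -1 + (cn TYPE('n))^2 < t \<and> t < 0}"

text \<open>Characteristic polynomial det(X I - M); eigenvalues with multiplicity are its roots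
  counted with their order.\<close>
definition charpoly :: "real^'n^'n \<Rightarrow> real poly" where
  "charpoly M = det (\<chi> i j. if i = j then [:- (M $ i $ j), 1:] else [:- (M $ i $ j):])"

definition pucci_max :: "real \<Rightarrow> real \<Rightarrow> real^'n^'n \<Rightarrow> real" where
  "pucci_max lam Lam M =
     Lam * (\<Sum>e\<in>{e. poly (charpoly M) e = 0 \<and> e > 0}. real (order e (charpoly M)) * e)
   + lam * (\<Sum>e\<in>{e. poly (charpoly M) e = 0 \<and> e < 0}. real (order e (charpoly M)) * e)"

definition C2x_on :: "((real^'n) \<times> real) set \<Rightarrow> ((real^'n) \<times> real \<Rightarrow> real) \<Rightarrow> bool" where
  "C2x_on S h \<longleftrightarrow> (\<exists>(Dh :: (real^'n) \<times> real \<Rightarrow> real^'n) (D2h :: (real^'n) \<times> real \<Rightarrow> real^'n^'n).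
      continuous_on S Dh \<and> continuous_on S D2h \<and>
      (\<forall>(x,t)\<in>S. ((\<lambda>y. h (y,t)) has_derivative (\<lambda>v. Dh (x,t) \<bullet> v)) (at x) \<and>
                  ((\<lambda>y. Dh (y,t)) has_derivative (\<lambda>v. D2h (x,t) *v v)) (at x)))"

text \<open>Viscosity sense of  P^+(D^2 h) - h_t + phit(|Dh|) \<le> g  in Q1 (test functions touching
  from below).\<close>
definition visc_ineq ::
  "real \<Rightarrow> real \<Rightarrow> (real \<Rightarrow> real) \<Rightarrow> ((real^'n) \<times> real \<Rightarrow> real) \<Rightarrow> ((real^'n) \<times> real \<Rightarrow> real) \<Rightarrow> bool" where
  "visc_ineq lam Lam phit h g \<longleftrightarrow>
    (\<forall>p0\<in>Q1. \<forall>(\<theta> :: (real^'n) \<times> real \<Rightarrow> real) (G :: (real^'n) \<times> real \<Rightarrow> (real^'n) \<times> real) G'.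
       (\<exists>U. open U \<and> p0 \<in> U \<and> U \<subseteq> Q1 \<and>
          (\<forall>q\<in>U. (\<theta> has_derivative (\<lambda>v. G q \<bullet> v)) (at q) \<and> (G has_derivative G' q) (at q)) \<and>
          (\<forall>v. continuous_on U (\<lambda>q. G' q v)) \<and>
          (\<forall>q\<in>U. \<theta> q \<le> h q)) \<and> \<theta> p0 = h p0
       \<longrightarrow> pucci_max lam Lam (\<chi> i j. fst (G' p0 (axis j 1, 0)) $ i)
             - snd (G p0) + phit (norm (fst (G p0))) \<le> g p0)"

end

theory Submission
  imports Defs
begin

definition charmat :: "real \<Rightarrow> real^'n^'n \<Rightarrow> real^'n^'n" where
  "charmat e M = (\<chi> i j. (if i = j then e else 0) - M$i$j)"

lemma poly_charpoly: "poly (charpoly M) e = det (charmat e M)"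
proof -
  have *: "poly (if i = j then [:- a, 1:] else [:- a:]) e = (if i = j then e else 0) - a" for i j :: 'a and a
    by auto
  show ?thesis
    unfolding charpoly_def det_def charmat_def by (simp add: poly_sum poly_prod *)
qed

lemma charmat_mult: "charmat e M *v w = e *\<^sub>R w - M *v w"
proof -
  have *: "(\<Sum>j\<in>UNIV. w $ j * (if i = j then e else 0)) = e * w$i" for i
    by (subst sum.cong[OF refl, of _ _ "\<lambda>j. if i = j then e * w$j else 0"]) auto
  show ?thesis
    by (simp add: charmat_def matrix_vector_mult_def vec_eq_iff algebra_simps sum_subtractf *)
qed

lemma det_zero_kernel:
  fixes A :: "real^'n^'n"
  shows "det A = 0 \<longleftrightarrow> (\<exists>w. w \<noteq> 0 \<and> A *v w = 0)"
  using invertible_det_nz[of A] invertible_left_inverse[of A] matrix_left_invertible_ker[of A]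
  by auto

lemma root_iff_eigen:
  fixes M :: "real^'n^'n"
  shows "poly (charpoly M) e = 0 \<longleftrightarrow> (\<exists>w. w \<noteq> 0 \<and> M *v w = e *\<^sub>R w)"
proof -
  have "poly (charpoly M) e = 0 \<longleftrightarrow> (\<exists>w. w \<noteq> 0 \<and> e *\<^sub>R w - M *v w = 0)"
    unfolding poly_charpoly det_zero_kernel charmat_mult ..
  also have "\<dots> \<longleftrightarrow> (\<exists>w. w \<noteq> 0 \<and> M *v w = e *\<^sub>R w)"
    by (metis eq_iff_diff_eq_0)
  finally show ?thesis .
qed

lemma root_le:
  fixes M :: "real^'n^'n"
  assumes "\<forall>u. u \<bullet> (M *v u) \<le> \<beta> * (u \<bullet> u)" "poly (charpoly M) e = 0"
  shows "e \<le> \<beta>"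
proof -
  obtain w where w: "w \<noteq> 0" "M *v w = e *\<^sub>R w" using assms(2) root_iff_eigen by blast
  have "e * (w \<bullet> w) \<le> \<beta> * (w \<bullet> w)" using assms(1)[rule_format, of w] w by simp
  moreover have "w \<bullet> w > 0" using w by simp
  ultimately show ?thesis by simp
qed

lemma charpoly_nz:
  fixes M :: "real^'n^'n"
  assumes "\<forall>u. u \<bullet> (M *v u) \<le> \<beta> * (u \<bullet> u)"
  shows "charpoly M \<noteq> 0"
proof
  assume "charpoly M = 0"
  then have "poly (charpoly M) (\<beta>+1) = 0" by simp
  from root_le[OF assms this] show False by simp
qed

lemma degree_charpoly: "degree (charpoly (M::real^'n^'n)) \<le> CARD('n)"
  unfolding charpoly_def det_def
proof (rule degree_sum_le)
  fix p assume "p \<in> {p. p permutes (UNIV::'n set)}"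
  let ?A = "(\<chi> i j. if i = j then [:- (M $ i $ j), 1:] else [:- (M $ i $ j):]) :: real poly^'n^'n"
  have "degree (of_int (sign p) * prod (\<lambda>i. ?A $ i $ p i) UNIV)
        \<le> degree (of_int (sign p) :: real poly) + degree (prod (\<lambda>i. ?A $ i $ p i) UNIV)"
    by (rule degree_mult_le)
  also have "degree (prod (\<lambda>i. ?A $ i $ p i) UNIV) \<le> sum (degree \<circ> (\<lambda>i. ?A $ i $ p i)) UNIV"
    by (rule degree_prod_sum_le) simp
  also have "\<dots> \<le> sum (\<lambda>i. 1) (UNIV::'n set)"
    by (rule sum_mono) auto
  finally show "degree (of_int (sign p) * prod (\<lambda>i. ?A $ i $ p i) UNIV) \<le> CARD('n)"
    by (simp add: degree_of_int)
qed simp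

lemma inner_sym:
  fixes M :: "real^'n^'n"
  assumes "\<forall>i j. M$i$j = M$j$i"
  shows "x \<bullet> (M *v y) = y \<bullet> (M *v x)"
proof -
  have "x \<bullet> (M *v y) = (\<Sum>i\<in>UNIV. \<Sum>j\<in>UNIV. x$i * M$i$j * y$j)"
    by (simp add: inner_vec_def matrix_vector_mult_def sum_distrib_left mult.assoc)
  also have "\<dots> = (\<Sum>j\<in>UNIV. \<Sum>i\<in>UNIV. x$i * M$i$j * y$j)" by (rule sum.swap)
  also have "\<dots> = y \<bullet> (M *v x)"
    by (simp add: inner_vec_def matrix_vector_mult_def sum_distrib_left assms mult_ac)
  finally show ?thesis .
qed

lemma quad_zero:
  fixes a b :: real
  assumes "b \<ge> 0" "\<forall>z. 2*z*a + z^2*b \<ge> 0"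
  shows "a = 0"
proof (rule ccontr)
  assume "a \<noteq> 0"
  have b1: "b + 1 > 0" using assms(1) by simp
  define z where "z = -a/(b+1)"
  have zb: "z*(b+1) = -a" using b1 unfolding z_def by simp
  have "(b+1)^2 * (2*z*a + z^2*b) = 2*a*(b+1)*(z*(b+1)) + (z*(b+1))^2*b"
    by (simp add: algebra_simps power2_eq_square)
  also have "\<dots> = (-(a^2))*(b+2)" unfolding zb by (simp add: algebra_simps power2_eq_square)
  finally have e: "(b+1)^2 * (2*z*a + z^2*b) = (-(a^2))*(b+2)" .
  moreover have "(-(a^2))*(b+2) < 0" using \<open>a \<noteq> 0\<close> assms(1) by (simp add: mult_pos_pos)
  moreover have "(b+1)^2 > 0" using b1 by simp
  ultimately have "2*z*a + z^2*b < 0" by (metis mult_less_0_iff not_less_iff_gr_or_eq)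
  then show False using assms(2) by (metis not_le)
qed

lemma min_eigen:
  fixes M :: "real^'n^'n"
  assumes sym: "\<forall>i j. M$i$j = M$j$i" and v: "v \<noteq> 0"
  shows "\<exists>e. poly (charpoly M) e = 0 \<and> e \<le> (v \<bullet> (M *v v)) / (v \<bullet> v)"
proof -
  let ?Q = "\<lambda>u. u \<bullet> (M *v u)"
  have cQ: "continuous_on UNIV ?Q"
    by (intro continuous_intros linear_continuous_on) (simp add: linear_linear)
  have "compact (sphere (0::real^'n) 1)" by simp
  moreover have "sphere (0::real^'n) 1 \<noteq> {}" by simp
  ultimately obtain u where u: "u \<in> sphere 0 1" and umin: "\<forall>y\<in>sphere 0 1. ?Q u \<le> ?Q y"
    using continuous_attains_inf[of "sphere 0 1" ?Q] continuous_on_subset[OF cQ] by blast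
  define e where "e = ?Q u"
  have uu: "u \<bullet> u = 1" using u by (simp add: dot_square_norm)
  have Qscale: "?Q (c *\<^sub>R y) = c^2 * ?Q y" for c y
    by (simp add: matrix_vector_mult_scaleR power2_eq_square)
  have ge: "?Q y \<ge> e * (y \<bullet> y)" for y
  proof (cases "y = 0")
    case False
    let ?c = "norm y"
    have "(1/?c) *\<^sub>R y \<in> sphere 0 1" using False by simp
    then have "e \<le> ?Q ((1/?c) *\<^sub>R y)" unfolding e_def by (rule umin[rule_format])
    also have "\<dots> = ?Q y / ?c^2" by (subst Qscale) (simp add: power_divide)
    finally show ?thesis using False by (simp add: dot_square_norm field_simps)
  qed simp
  define r where "r = M *v u - e *\<^sub>R u"
  have "r \<bullet> r = 0"
  proof (rule quad_zero)
    show "?Q r - e * (r \<bullet> r) \<ge> 0" using ge[of r] by simp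
    show "\<forall>s. 0 \<le> 2 * s * (r \<bullet> r) + s\<^sup>2 * (?Q r - e * (r \<bullet> r))"
    proof
      fix s :: real
      have "0 \<le> ?Q (u + s *\<^sub>R r) - e * ((u + s *\<^sub>R r) \<bullet> (u + s *\<^sub>R r))"
        using ge[of "u + s *\<^sub>R r"] by simp
      also have "\<dots> = (?Q u - e * (u \<bullet> u)) + s * (u \<bullet> (M *v r) + r \<bullet> (M *v u) - 2 * e * (u \<bullet> r))
           + s^2 * (?Q r - e * (r \<bullet> r))"
        by (simp add: matrix_vector_right_distrib matrix_vector_mult_scaleR inner_add_left
            inner_add_right algebra_simps power2_eq_square inner_commute)
      also have "u \<bullet> (M *v r) = r \<bullet> (M *v u)" using inner_sym[OF sym] by blast
      also have "r \<bullet> (M *v u) + r \<bullet> (M *v u) - 2 * e * (u \<bullet> r) = 2 * (r \<bullet> r)"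
        unfolding r_def by (simp add: inner_diff_left inner_diff_right inner_commute algebra_simps)
      finally show "0 \<le> 2 * s * (r \<bullet> r) + s\<^sup>2 * (?Q r - e * (r \<bullet> r))"
        using uu e_def by simp
    qed
  qed
  then have "M *v u = e *\<^sub>R u" unfolding r_def by simp
  moreover have "u \<noteq> 0" using u by auto
  ultimately have root: "poly (charpoly M) e = 0" using root_iff_eigen by blast
  have "e * (v \<bullet> v) \<le> ?Q v" using ge by simp
  then have "e \<le> ?Q v / (v \<bullet> v)" using v by (simp add: field_simps)
  with root show ?thesis by blast
qed

lemma pucci_bound:
  fixes M :: "real^'n^'n"
  assumes lam: "0 < lam" and Lam: "0 \<le> Lam" and b: "0 \<le> \<beta>"
    and Q: "\<forall>u. u \<bullet> (M *v u) \<le> \<beta> * (u \<bullet> u)"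
    and neg: "m \<le> 0" "m < 0 \<longrightarrow> (\<exists>e. poly (charpoly M) e = 0 \<and> e \<le> m)"
  shows "pucci_max lam Lam M \<le> Lam * CARD('n) * \<beta> + lam * m"
proof -
  let ?p = "charpoly M"
  have p0: "?p \<noteq> 0" using charpoly_nz[OF Q] .
  have fin: "finite {e. poly ?p e = 0}" using poly_roots_finite[OF p0] .
  let ?P = "{e. poly ?p e = 0 \<and> e > 0}" and ?N = "{e. poly ?p e = 0 \<and> e < 0}"
  have finP: "finite ?P" and finN: "finite ?N" using fin by (auto intro: finite_subset)
  have "(\<Sum>e\<in>?P. real (order e ?p) * e) \<le> (\<Sum>e\<in>?P. real (order e ?p) * \<beta>)"
    by (rule sum_mono) (use root_le[OF Q] in \<open>auto intro: mult_left_mono\<close>)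
  also have "\<dots> = \<beta> * real (\<Sum>e\<in>?P. order e ?p)" by (simp add: sum_distrib_left mult_ac)
  also have "(\<Sum>e\<in>?P. order e ?p) \<le> (\<Sum>e | poly ?p e = 0. order e ?p)"
    by (rule sum_mono2[OF fin]) auto
  also have "\<dots> \<le> degree ?p" by (rule sum_order_le_degree[OF p0])
  also have "\<dots> \<le> CARD('n)" by (rule degree_charpoly)
  finally have pos: "(\<Sum>e\<in>?P. real (order e ?p) * e) \<le> \<beta> * CARD('n)"
    using b by (simp add: mult_left_mono)
  have negs: "(\<Sum>e\<in>?N. real (order e ?p) * e) \<le> m"
  proof (cases "m < 0")
    case True
    then obtain e0 where e0: "poly ?p e0 = 0" "e0 \<le> m" using neg by blast
    then have e0N: "e0 \<in> ?N" using True by simp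
    have "(\<Sum>e\<in>?N. real (order e ?p) * e) = real (order e0 ?p) * e0 + (\<Sum>e\<in>?N-{e0}. real (order e ?p) * e)"
      by (rule sum.remove[OF finN e0N])
    also have "(\<Sum>e\<in>?N-{e0}. real (order e ?p) * e) \<le> 0"
      by (rule sum_nonpos) (auto intro: mult_nonneg_nonpos)
    also have "real (order e0 ?p) * e0 \<le> e0"
    proof -
      have "order e0 ?p \<ge> 1" using e0(1) p0 order_root by (metis less_one not_le)
      then show ?thesis using e0N by (simp add: mult_le_cancel_right1)
    qed
    finally show ?thesis using e0 by simp
  next
    case False
    then have "m = 0" using neg by simp
    moreover have "(\<Sum>e\<in>?N. real (order e ?p) * e) \<le> 0"
      by (rule sum_nonpos) (auto intro: mult_nonneg_nonpos)
    ultimately show ?thesis by simp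
  qed
  have "pucci_max lam Lam M = Lam * (\<Sum>e\<in>?P. real (order e ?p) * e) + lam * (\<Sum>e\<in>?N. real (order e ?p) * e)"
    unfolding pucci_max_def ..
  also have "\<dots> \<le> Lam * (\<beta> * CARD('n)) + lam * m"
    using pos negs lam Lam by (intro add_mono mult_left_mono) auto
  finally show ?thesis by (simp add: mult_ac)
qed

lemma second_order_min:
  fixes f f1 :: "real \<Rightarrow> real"
  assumes d: "\<delta> > 0"
    and D1: "\<forall>s. \<bar>s\<bar> < \<delta> \<longrightarrow> (f has_real_derivative f1 s) (at s)"
    and D2: "(f1 has_real_derivative f2) (at 0)"
    and mn: "\<forall>s. \<bar>s\<bar> < \<delta> \<longrightarrow> f 0 \<le> f s"
  shows "f1 0 = 0" "0 \<le> f2"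
proof -
  have "(f has_real_derivative f1 0) (at 0)" using D1 d by simp
  moreover have "\<forall>y. \<bar>0 - y\<bar> < \<delta> \<longrightarrow> f 0 \<le> f y" using mn by simp
  ultimately show z: "f1 0 = 0" using DERIV_local_min d by blast
  show "0 \<le> f2"
  proof (rule ccontr)
    assume "\<not> 0 \<le> f2"
    then have f2: "f2 < 0" by simp
    have "((\<lambda>y. (f1 y - f1 0) / (y - 0)) \<longlongrightarrow> f2) (at 0)"
      using D2 has_field_derivative_iff by blast
    then have "((\<lambda>y. f1 y / y) \<longlongrightarrow> f2) (at 0)" using z by simp
    then have "eventually (\<lambda>y. f1 y / y < 0) (at 0)"
      using order_tendstoD(2)[OF _ f2] by blast
    then obtain d where d0: "d > 0" and dd: "\<forall>y. y \<noteq> 0 \<and> dist y 0 < d \<longrightarrow> f1 y / y < 0"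
      unfolding eventually_at by blast
    define s where "s = min d \<delta> / 2"
    have s0: "0 < s" "s < d" "s < \<delta>" using d0 d unfolding s_def by auto
    obtain z where zz: "0 < z" "z < s" "f s - f 0 = (s - 0) * f1 z"
      using MVT2[of 0 s f f1] s0 D1 by force
    have "f1 z / z < 0" using dd zz s0 by auto
    then have "f1 z < 0" using zz by (simp add: divide_less_0_iff)
    then have "s * f1 z < 0" using s0 by (simp add: mult_pos_neg)
    then have "f s < f 0" using zz by simp
    moreover have "f 0 \<le> f s" using mn s0 by simp
    ultimately show False by simp
  qed
qed

lemma line_derivs:
  fixes k :: "'a::real_normed_vector \<Rightarrow> real"
  assumes V: "open V" "x0 \<in> V"
    and dk: "\<forall>y\<in>V. (k has_derivative Dk y) (at y)"
    and dH: "((\<lambda>y. Dk y u) has_derivative H) (at x0)"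
  shows "\<exists>\<delta>>0. \<forall>s. \<bar>s\<bar> < \<delta> \<longrightarrow> x0 + s *\<^sub>R u \<in> V \<and>
            ((\<lambda>s. k (x0 + s *\<^sub>R u)) has_real_derivative Dk (x0 + s *\<^sub>R u) u) (at s)"
    and "((\<lambda>s. Dk (x0 + s *\<^sub>R u) u) has_real_derivative H u) (at 0)"
proof -
  obtain r where r: "r > 0" "ball x0 r \<subseteq> V" using V open_contains_ball by blast
  define \<delta> where "\<delta> = r / (norm u + 1)"
  have nu: "norm u + 1 > 0" by (smt (verit) norm_ge_zero)
  have d0: "\<delta> > 0" using r nu unfolding \<delta>_def by (intro divide_pos_pos) auto
  show "\<exists>\<delta>>0. \<forall>s. \<bar>s\<bar> < \<delta> \<longrightarrow> x0 + s *\<^sub>R u \<in> V \<and>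
            ((\<lambda>s. k (x0 + s *\<^sub>R u)) has_real_derivative Dk (x0 + s *\<^sub>R u) u) (at s)"
  proof (intro exI[of _ \<delta>] conjI allI impI d0)
    fix s :: real assume s: "\<bar>s\<bar> < \<delta>"
    have "norm (s *\<^sub>R u) < r"
    proof -
      have "norm (s *\<^sub>R u) = \<bar>s\<bar> * norm u" by simp
      also have "\<dots> \<le> \<bar>s\<bar> * (norm u + 1)" by (simp add: mult_left_mono)
      also have "\<dots> < \<delta> * (norm u + 1)" using s nu by (intro mult_strict_right_mono) auto
      also have "\<dots> = r" unfolding \<delta>_def using nu by simp
      finally show ?thesis .
    qed
    then show xin: "x0 + s *\<^sub>R u \<in> V" using r by (auto simp: dist_norm)
    have lin: "((\<lambda>s. x0 + s *\<^sub>R u) has_derivative (\<lambda>h. h *\<^sub>R u)) (at s)"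
      by (intro derivative_eq_intros) auto
    have dd: "((\<lambda>s. k (x0 + s *\<^sub>R u)) has_derivative (\<lambda>h. Dk (x0 + s *\<^sub>R u) (h *\<^sub>R u))) (at s)"
      using has_derivative_compose[OF lin dk[rule_format, OF xin]] by (simp add: o_def)
    have bl: "bounded_linear (Dk (x0 + s *\<^sub>R u))"
      using dk xin has_derivative_bounded_linear by blast
    show "((\<lambda>s. k (x0 + s *\<^sub>R u)) has_real_derivative Dk (x0 + s *\<^sub>R u) u) (at s)"
    proof -
      have "(\<lambda>h. Dk (x0 + s *\<^sub>R u) (h *\<^sub>R u)) = (*) (Dk (x0 + s *\<^sub>R u) u)"
        by (rule ext) (simp add: linear_simps(5)[OF bl] mult.commute)
      with dd show ?thesis unfolding has_field_derivative_def by simp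
    qed
  qed
  have lin: "((\<lambda>s. x0 + s *\<^sub>R u) has_derivative (\<lambda>h. h *\<^sub>R u)) (at 0)"
    by (intro derivative_eq_intros) auto
  have dd: "((\<lambda>s. Dk (x0 + s *\<^sub>R u) u) has_derivative (\<lambda>h. H (h *\<^sub>R u))) (at 0)"
    using has_derivative_compose[OF lin, of "\<lambda>y. Dk y u" H] dH by (simp add: o_def)
  have bl: "bounded_linear H" using dH has_derivative_bounded_linear by blast
  show "((\<lambda>s. Dk (x0 + s *\<^sub>R u) u) has_real_derivative H u) (at 0)"
  proof -
    have "(\<lambda>h. H (h *\<^sub>R u)) = (*) (H u)"
      by (rule ext) (simp add: linear_simps(5)[OF bl] mult.commute)
    with dd show ?thesis unfolding has_field_derivative_def by simp
  qed
qed

lemma line_deriv1: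
  fixes k :: "'a::real_normed_vector \<Rightarrow> real"
  assumes "(k has_derivative Dk) (at (x0 + s *\<^sub>R u))"
  shows "((\<lambda>s. k (x0 + s *\<^sub>R u)) has_real_derivative Dk u) (at s)"
proof -
  have lin: "((\<lambda>s. x0 + s *\<^sub>R u) has_derivative (\<lambda>h. h *\<^sub>R u)) (at s)"
    by (intro derivative_eq_intros) auto
  have dd: "((\<lambda>s. k (x0 + s *\<^sub>R u)) has_derivative (\<lambda>h. Dk (h *\<^sub>R u))) (at s)"
    using has_derivative_compose[OF lin assms] by (simp add: o_def)
  have bl: "bounded_linear Dk" using assms has_derivative_bounded_linear by blast
  have "(\<lambda>h. Dk (h *\<^sub>R u)) = (*) (Dk u)"
    by (rule ext) (simp add: linear_simps(5)[OF bl] mult.commute)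
  with dd show ?thesis unfolding has_field_derivative_def by simp
qed

lemma schwarz_aux:
  fixes \<theta> :: "'a::real_inner \<Rightarrow> real" and G :: "'a \<Rightarrow> 'a"
  assumes U: "open U" "p \<in> U"
    and d1: "\<forall>q\<in>U. (\<theta> has_derivative (\<lambda>v. G q \<bullet> v)) (at q)"
    and d2: "(G has_derivative L) (at p)"
    and e: "e > 0"
  shows "\<exists>d>0. \<forall>s. 0 < s \<and> s < d \<longrightarrow>
     \<bar>\<theta> (p + s *\<^sub>R b + s *\<^sub>R a) - \<theta> (p + s *\<^sub>R a) - \<theta> (p + s *\<^sub>R b) + \<theta> p - s^2 * (L b \<bullet> a)\<bar> \<le> e * s^2"
proof -
  have bl: "bounded_linear L" using d2 has_derivative_bounded_linear by blast
  define K where "K = (norm b + 2 * norm a + 1) * (norm a + 1)"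
  have K0: "K > 0" unfolding K_def by (smt (verit) norm_ge_zero mult_pos_pos)
  obtain d1 where d10: "d1 > 0" and d1p: "\<forall>y. norm (y - p) < d1 \<longrightarrow>
      norm (G y - G p - L (y - p)) \<le> (e/K) * norm (y - p)"
    using d2 e K0 unfolding has_derivative_at_alt by (meson divide_pos_pos)
  obtain r where r: "r > 0" "ball p r \<subseteq> U" using U open_contains_ball by blast
  define N where "N = norm a + norm b + 1"
  have N0: "N > 0" unfolding N_def by (smt (verit) norm_ge_zero)
  define d where "d = min (d1 / N) (r / N)"
  have d0: "d > 0" unfolding d_def using d10 r N0 by simp
  show ?thesis
  proof (intro exI[of _ d] conjI allI impI d0)
    fix s :: real assume s: "0 < s \<and> s < d"
    have sN1: "s * N < d1" and sN2: "s * N < r"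
      using s N0 unfolding d_def by (auto simp: less_divide_eq mult.commute)
    have nb: "norm (s *\<^sub>R b + \<tau> *\<^sub>R a) \<le> s * norm b + s * norm a" and nb2: "norm (\<tau> *\<^sub>R a) \<le> s * norm a"
      if "0 \<le> \<tau>" "\<tau> \<le> s" for \<tau>
    proof -
      have "norm (\<tau> *\<^sub>R a) = \<tau> * norm a" using that by simp
      also have "\<dots> \<le> s * norm a" using that by (simp add: mult_right_mono)
      finally show "norm (\<tau> *\<^sub>R a) \<le> s * norm a" .
      then show "norm (s *\<^sub>R b + \<tau> *\<^sub>R a) \<le> s * norm b + s * norm a"
        using norm_triangle_ineq[of "s *\<^sub>R b" "\<tau> *\<^sub>R a"] s by simp
    qed
    have sNe: "s * N = s * norm a + s * norm b + s" by (simp add: N_def algebra_simps)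
    have "s * norm b \<ge> 0" using s by simp
    then have sNle: "s * norm b + s * norm a < s * N" and sNle2: "s * norm a < s * N"
      using s sNe by linarith+
    define \<phi> where "\<phi> = (\<lambda>\<tau>. \<theta> ((p + s *\<^sub>R b) + \<tau> *\<^sub>R a) - \<theta> (p + \<tau> *\<^sub>R a))"
    define \<phi>' where "\<phi>' = (\<lambda>\<tau>. G ((p + s *\<^sub>R b) + \<tau> *\<^sub>R a) \<bullet> a - G (p + \<tau> *\<^sub>R a) \<bullet> a)"
    have inU1: "(p + s *\<^sub>R b) + \<tau> *\<^sub>R a \<in> U" and inU2: "p + \<tau> *\<^sub>R a \<in> U"
      if "0 \<le> \<tau>" "\<tau> \<le> s" for \<tau>
    proof -
      have inb: "p + w \<in> U" if "norm w < r" for w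
        using that r(2) by (auto simp: dist_norm)
      have "norm (s *\<^sub>R b + \<tau> *\<^sub>R a) < r" using nb[OF that] sNle sN2 by simp
      then show "(p + s *\<^sub>R b) + \<tau> *\<^sub>R a \<in> U" using inb by (simp add: add.assoc)
      have "norm (\<tau> *\<^sub>R a) < r" using nb2[OF that] sNle2 sN2 by simp
      then show "p + \<tau> *\<^sub>R a \<in> U" using inb by simp
    qed
    have D: "(\<phi> has_real_derivative \<phi>' \<tau>) (at \<tau>)" if "0 \<le> \<tau>" "\<tau> \<le> s" for \<tau>
      unfolding \<phi>_def \<phi>'_def
      by (intro DERIV_diff line_deriv1[where Dk="\<lambda>v. G _ \<bullet> v"] d1[rule_format] inU1 inU2 that)
    obtain z where z: "0 < z" "z < s" "\<phi> s - \<phi> 0 = (s - 0) * \<phi>' z"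
      using MVT2[of 0 s \<phi> \<phi>'] D s by force
    have phis: "\<phi> s - \<phi> 0 = \<theta> (p + s *\<^sub>R b + s *\<^sub>R a) - \<theta> (p + s *\<^sub>R a) - \<theta> (p + s *\<^sub>R b) + \<theta> p"
      unfolding \<phi>_def by simp
    define w1 where "w1 = s *\<^sub>R b + z *\<^sub>R a"
    define w2 where "w2 = z *\<^sub>R a"
    define E1 where "E1 = G (p + w1) - G p - L w1"
    define E2 where "E2 = G (p + w2) - G p - L w2"
    have "L w1 - L w2 = s *\<^sub>R L b" unfolding w1_def w2_def
      by (simp add: linear_simps[OF bl])
    moreover have "\<phi>' z = G (p + w1) \<bullet> a - G (p + w2) \<bullet> a"
      unfolding \<phi>'_def w1_def w2_def by (simp add: add.assoc)
    moreover have "(E1 - E2) \<bullet> a = G (p + w1) \<bullet> a - G (p + w2) \<bullet> a - (L w1 - L w2) \<bullet> a"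
      unfolding E1_def E2_def by (simp add: inner_diff_left)
    ultimately have phiE: "\<phi>' z - s * (L b \<bullet> a) = (E1 - E2) \<bullet> a" by simp
    have z0: "0 \<le> z" "z \<le> s" using z by auto
    have nw1: "norm w1 \<le> s * norm b + s * norm a" unfolding w1_def using nb[OF z0] .
    have nw2: "norm w2 \<le> s * norm a" unfolding w2_def using nb2[OF z0] .
    have "norm E1 \<le> (e/K) * norm w1"
      using d1p[rule_format, of "p + w1"] nw1 sNle sN1 unfolding E1_def by simp
    moreover have "norm E2 \<le> (e/K) * norm w2"
      using d1p[rule_format, of "p + w2"] nw2 sNle2 sN1 unfolding E2_def by simp
    moreover have ek: "e/K > 0" using e K0 by simp
    moreover have "(e/K) * norm w1 \<le> (e/K) * (s * norm b + s * norm a)"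
      using ek nw1 by (intro mult_left_mono) auto
    moreover have "(e/K) * norm w2 \<le> (e/K) * (s * norm a)"
      using ek nw2 by (intro mult_left_mono) auto
    moreover have "(e/K) * (s * norm b + s * norm a) + (e/K) * (s * norm a) = (e/K) * (s * norm b + 2 * s * norm a)"
      by (simp add: algebra_simps)
    ultimately have "norm E1 + norm E2 \<le> (e/K) * (s * norm b + 2 * s * norm a)"
      by linarith
    moreover have "\<bar>(E1 - E2) \<bullet> a\<bar> \<le> (norm E1 + norm E2) * norm a"
      by (metis Cauchy_Schwarz_ineq2 mult_right_mono norm_ge_zero norm_triangle_ineq4 order_trans)
    ultimately have "\<bar>(E1 - E2) \<bullet> a\<bar> \<le> (e/K) * (s * norm b + 2 * s * norm a) * norm a"
      by (smt (verit, ccfv_SIG) mult_right_mono norm_ge_zero)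
    also have "\<dots> = (e/K) * s * ((norm b + 2 * norm a) * norm a)" by (simp add: algebra_simps)
    also have "\<dots> \<le> (e/K) * s * K"
      unfolding K_def using s e K0 by (intro mult_left_mono) (auto simp: algebra_simps)
    also have "\<dots> = e * s" using K0 by simp
    finally have bnd: "\<bar>\<phi>' z - s * (L b \<bullet> a)\<bar> \<le> e * s" using phiE by simp
    have "\<theta> (p + s *\<^sub>R b + s *\<^sub>R a) - \<theta> (p + s *\<^sub>R a) - \<theta> (p + s *\<^sub>R b) + \<theta> p - s^2 * (L b \<bullet> a)
        = s * (\<phi>' z - s * (L b \<bullet> a))"
      using phis z by (simp add: power2_eq_square algebra_simps)
    also have "\<bar>\<dots>\<bar> \<le> s * (e * s)" using bnd s by (simp add: abs_mult mult_left_mono)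
    finally show "\<bar>\<theta> (p + s *\<^sub>R b + s *\<^sub>R a) - \<theta> (p + s *\<^sub>R a) - \<theta> (p + s *\<^sub>R b) + \<theta> p - s^2 * (L b \<bullet> a)\<bar> \<le> e * s^2"
      by (simp add: power2_eq_square mult_ac)
  qed
qed

lemma hessian_sym:
  fixes \<theta> :: "'a::real_inner \<Rightarrow> real" and G :: "'a \<Rightarrow> 'a"
  assumes U: "open U" "p \<in> U"
    and d1: "\<forall>q\<in>U. (\<theta> has_derivative (\<lambda>v. G q \<bullet> v)) (at q)"
    and d2: "(G has_derivative L) (at p)"
  shows "L a \<bullet> b = L b \<bullet> a"
proof (rule ccontr)
  assume ne: "L a \<bullet> b \<noteq> L b \<bullet> a"
  define e where "e = \<bar>L a \<bullet> b - L b \<bullet> a\<bar> / 4"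
  have e0: "e > 0" using ne unfolding e_def by simp
  obtain d where d: "d > 0" "\<forall>s. 0 < s \<and> s < d \<longrightarrow>
     \<bar>\<theta> (p + s *\<^sub>R b + s *\<^sub>R a) - \<theta> (p + s *\<^sub>R a) - \<theta> (p + s *\<^sub>R b) + \<theta> p - s^2 * (L b \<bullet> a)\<bar> \<le> e * s^2"
    using schwarz_aux[OF U d1 d2 e0] by blast
  obtain d' where d': "d' > 0" "\<forall>s. 0 < s \<and> s < d' \<longrightarrow>
     \<bar>\<theta> (p + s *\<^sub>R a + s *\<^sub>R b) - \<theta> (p + s *\<^sub>R b) - \<theta> (p + s *\<^sub>R a) + \<theta> p - s^2 * (L a \<bullet> b)\<bar> \<le> e * s^2"
    using schwarz_aux[OF U d1 d2 e0, of a b] by blast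
  define s where "s = min d d' / 2"
  have s: "0 < s" "s < d" "s < d'" using d d' unfolding s_def by auto
  have comm: "p + s *\<^sub>R a + s *\<^sub>R b = p + s *\<^sub>R b + s *\<^sub>R a" by (simp add: algebra_simps)
  have A: "\<bar>\<theta> (p + s *\<^sub>R b + s *\<^sub>R a) - \<theta> (p + s *\<^sub>R a) - \<theta> (p + s *\<^sub>R b) + \<theta> p - s^2 * (L b \<bullet> a)\<bar> \<le> e * s^2"
    using d(2) s by blast
  have B: "\<bar>\<theta> (p + s *\<^sub>R a + s *\<^sub>R b) - \<theta> (p + s *\<^sub>R b) - \<theta> (p + s *\<^sub>R a) + \<theta> p - s^2 * (L a \<bullet> b)\<bar> \<le> e * s^2"
    using d'(2) s by blast
  have "\<bar>s^2 * (L b \<bullet> a) - s^2 * (L a \<bullet> b)\<bar> \<le> 2 * e * s^2"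
    using A B[unfolded comm] unfolding abs_le_iff by linarith
  moreover have "\<bar>s^2 * (L b \<bullet> a) - s^2 * (L a \<bullet> b)\<bar> = s^2 * \<bar>L a \<bullet> b - L b \<bullet> a\<bar>"
    by (metis abs_minus_commute abs_mult abs_power2 right_diff_distrib)
  ultimately have "s^2 * \<bar>L a \<bullet> b - L b \<bullet> a\<bar> \<le> s^2 * (2 * e)" by (simp add: mult_ac)
  then have "\<bar>L a \<bullet> b - L b \<bullet> a\<bar> \<le> 2 * e" using s by simp
  then show False using e0 unfolding e_def by simp
qed

lemma eta_sublinear:
  fixes eta :: "real \<Rightarrow> real"
  assumes pos: "\<forall>t\<ge>0. eta t \<ge> 1"
    and dif: "\<forall>\<^sub>F t in at_top. eta differentiable (at t)"
    and lim: "((\<lambda>t. t * deriv eta t / eta t * ln (eta t)) \<longlongrightarrow> 0) at_top"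
    and ep: "\<epsilon> > 0"
  shows "\<exists>T. \<forall>t\<ge>T. eta t \<le> \<epsilon> * t"
proof -
  obtain T1 where T1: "\<forall>t\<ge>T1. eta differentiable (at t)"
    using dif unfolding eventually_at_top_linorder by blast
  have "\<forall>\<^sub>F t in at_top. t * deriv eta t / eta t * ln (eta t) < 1/2"
    by (rule order_tendstoD(2)[OF lim]) simp
  then obtain T2 where T2: "\<forall>t\<ge>T2. t * deriv eta t / eta t * ln (eta t) < 1/2"
    unfolding eventually_at_top_linorder by blast
  define T0 where "T0 = max 1 (max T1 T2)"
  define F where "F = (\<lambda>t. (ln (eta t))^2 - ln t)"
  have Fd: "\<exists>y. (F has_real_derivative y) (at t) \<and> y \<le> 0" if "T0 \<le> t" for t
  proof -
    have t1: "t \<ge> 1" "t \<ge> T1" "t \<ge> T2" using that unfolding T0_def by auto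
    have et: "eta t \<ge> 1" using pos t1 by simp
    have De: "(eta has_real_derivative deriv eta t) (at t)"
      using T1 t1 DERIV_deriv_iff_real_differentiable by blast
    have Dl: "((\<lambda>t. ln (eta t)) has_real_derivative (inverse (eta t) * deriv eta t)) (at t)"
      using DERIV_chain2[OF DERIV_ln De] et by simp
    have "(F has_real_derivative (of_nat 2 * ((inverse (eta t) * deriv eta t) * ln (eta t) ^ (2 - Suc 0)) - inverse t)) (at t)"
      unfolding F_def using t1 by (intro DERIV_diff DERIV_power Dl DERIV_ln) simp
    moreover have "of_nat 2 * ((inverse (eta t) * deriv eta t) * ln (eta t) ^ (2 - Suc 0)) - inverse t
       = 2 * ln (eta t) * (deriv eta t / eta t) - 1/t" by (simp add: field_simps)
    ultimately have "(F has_real_derivative (2 * ln (eta t) * (deriv eta t / eta t) - 1/t)) (at t)"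
      by simp
    moreover have "2 * ln (eta t) * (deriv eta t / eta t) - 1/t \<le> 0"
    proof -
      have "t * deriv eta t / eta t * ln (eta t) < 1/2" using T2 t1 by simp
      then have "t * (2 * ln (eta t) * (deriv eta t / eta t)) < 1" by (simp add: field_simps)
      then have "2 * ln (eta t) * (deriv eta t / eta t) < 1/t" using t1 by (simp add: field_simps mult.commute)
      then show ?thesis by simp
    qed
    ultimately show ?thesis by blast
  qed
  define C where "C = max 0 (F T0)"
  have FC: "(ln (eta t))^2 \<le> C + ln t" if "t \<ge> T0" for t
  proof -
    have "F t \<le> F T0" using DERIV_nonpos_imp_nonincreasing[of T0 t F] Fd that by blast
    then show ?thesis unfolding F_def C_def by simp
  qed
  define T where "T = max T0 (exp (4 * (C + 1) + 2 * \<bar>ln \<epsilon>\<bar>))"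
  show ?thesis
  proof (intro exI[of _ T] allI impI)
    fix t assume tT: "T \<le> t"
    have tT0: "t \<ge> T0" using tT unfolding T_def by simp
    have t1: "t \<ge> 1" using tT0 unfolding T0_def by simp
    define y where "y = ln t"
    have ty: "t = exp y" using t1 unfolding y_def by simp
    have "exp (4 * (C + 1) + 2 * \<bar>ln \<epsilon>\<bar>) \<le> T" unfolding T_def by (rule max.cobounded2)
    then have "exp (4 * (C + 1) + 2 * \<bar>ln \<epsilon>\<bar>) \<le> exp y" using tT ty by linarith
    then have ybig: "y \<ge> 4 * (C + 1) + 2 * \<bar>ln \<epsilon>\<bar>" by (rule exp_le_cancel_iff[THEN iffD1])
    have C0: "C \<ge> 0" unfolding C_def by simp
    have y4: "y \<ge> 4 * C + 4 + 2 * \<bar>ln \<epsilon>\<bar>" using ybig by (simp add: algebra_simps)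
    have y1: "y \<ge> 1" using y4 C0 abs_ge_zero[of "ln \<epsilon>"] by linarith
    have "(ln (eta t))^2 \<le> C + y" using FC[OF tT0] unfolding y_def by simp
    also have "\<dots> \<le> y * (C + 1)" using mult_right_mono[OF y1 C0] by (simp add: algebra_simps)
    also have "\<dots> \<le> y * (y / 4)" using y4 y1 abs_ge_zero[of "ln \<epsilon>"] by (intro mult_left_mono) linarith+
    also have "\<dots> = (y/2)^2" by (simp add: power2_eq_square)
    finally have "(ln (eta t))^2 \<le> (y/2)^2" .
    have e1: "eta t \<ge> 1" using pos t1 by auto
    have y0: "0 \<le> y/2" using y1 by simp
    have le: "ln (eta t) \<le> y/2" by (rule power2_le_imp_le[OF \<open>(ln (eta t))^2 \<le> (y/2)^2\<close> y0])
    have et: "eta t > 0" using e1 by linarith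
    have "eta t = exp (ln (eta t))" using et by simp
    also have "\<dots> \<le> exp (y/2)" using le by (rule exp_mono)
    also have "exp (y/2) \<le> \<epsilon> * exp y"
    proof -
      have "y/2 \<ge> - ln \<epsilon>" using y4 C0 abs_ge_zero[of "ln \<epsilon>"] abs_ge_minus_self[of "ln \<epsilon>"] by linarith
      then have "exp (y/2) \<ge> exp (- ln \<epsilon>)" by (rule exp_mono)
      also have "exp (- ln \<epsilon>) = 1/\<epsilon>" using ep by (simp add: exp_minus divide_inverse)
      finally have h: "\<epsilon> * exp (y/2) \<ge> 1" using ep by (simp add: divide_le_eq mult.commute)
      have "exp (y/2) = 1 * exp (y/2)" by simp
      also have "\<dots> \<le> (\<epsilon> * exp (y/2)) * exp (y/2)" using h by (intro mult_right_mono) auto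
      also have "\<dots> = \<epsilon> * (exp (y/2) * exp (y/2))" by (simp add: mult.assoc)
      also have "exp (y/2) * exp (y/2) = exp (y/2 + y/2)" by (rule exp_add[symmetric])
      also have "y/2 + y/2 = y" by simp
      finally show ?thesis .
    qed
    finally show "eta t \<le> \<epsilon> * t" using ty by simp
  qed
qed

definition Pf :: "real \<Rightarrow> real" where "Pf y = (max 0 y)^2"

lemma Pf_deriv: "(Pf has_real_derivative (2 * max 0 y)) (at y)"
proof (cases "y = 0")
  case True
  have e: "\<forall>\<^sub>F z in at 0. max 0 z = (Pf z - Pf 0) / (z - 0)"
    unfolding eventually_at_filter Pf_def by (auto simp: max_def power2_eq_square)
  have "((\<lambda>z. max 0 z) \<longlongrightarrow> max 0 0) (at (0::real))"
    by (intro tendsto_intros)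
  then have "((\<lambda>z. (Pf z - Pf 0) / (z - 0)) \<longlongrightarrow> 0) (at 0)"
    using tendsto_cong[OF e] by simp
  then have "(Pf has_real_derivative 0) (at 0)" unfolding has_field_derivative_iff .
  then show ?thesis using True by simp
next
  case False
  show ?thesis
  proof (cases "y > 0")
    case True
    have "((\<lambda>z. z^2) has_real_derivative (2 * y)) (at y)"
      by (auto intro!: derivative_eq_intros)
    then have "((\<lambda>z. z^2) has_real_derivative (2 * max 0 y)) (at y)" using True by simp
    then show ?thesis
      by (rule has_field_derivative_transform_within_open[of _ _ _ "{0<..}"]) (use True in \<open>auto simp: Pf_def\<close>)
  next
    case False
    then have y0: "y < 0" using \<open>y \<noteq> 0\<close> by simp
    have "((\<lambda>z. 0) has_real_derivative (2 * max 0 y)) (at y)" using y0 by simp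
    then show ?thesis
      by (rule has_field_derivative_transform_within_open[of _ _ _ "{..<0}"]) (use y0 in \<open>auto simp: Pf_def\<close>)
  qed
qed

lemma Pf_nonneg: "Pf y \<ge> 0" unfolding Pf_def by simp
lemma Pf_pos: "y > 0 \<Longrightarrow> Pf y = y^2" unfolding Pf_def by simp
lemma Pf_nonpos: "y \<le> 0 \<Longrightarrow> Pf y = 0" unfolding Pf_def by simp

definition Bf :: "real \<Rightarrow> real \<Rightarrow> real \<Rightarrow> real" where
  "Bf B0 a t = B0 * exp (-(a*(t+1)))"
definition rhof :: "real \<Rightarrow> real \<Rightarrow> real" where
  "rhof k t = 9/10 * (1 - exp (-(k*(t+1))))"
definition rhod :: "real \<Rightarrow> real \<Rightarrow> real" where
  "rhod k t = 9/10 * k * exp (-(k*(t+1)))"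

lemma Bf_deriv: "(Bf B0 a has_real_derivative (- a * Bf B0 a t)) (at t)"
  unfolding Bf_def by (auto intro!: derivative_eq_intros)

lemma rhof_deriv: "(rhof k has_real_derivative rhod k t) (at t)"
  unfolding rhof_def rhod_def by (auto intro!: derivative_eq_intros)

definition hb :: "real \<Rightarrow> real \<Rightarrow> real \<Rightarrow> (real^'n) \<times> real \<Rightarrow> real" where
  "hb B0 a k p = - Bf B0 a (snd p) * Pf ((rhof k (snd p))^2 - fst p \<bullet> fst p)"

lemma hb_t_deriv:
  "((\<lambda>\<tau>. hb B0 a k (x, \<tau>)) has_real_derivative
     (a * Bf B0 a t * Pf ((rhof k t)^2 - x \<bullet> x) - Bf B0 a t * (2 * max 0 ((rhof k t)^2 - x \<bullet> x)) * (2 * rhof k t * rhod k t))) (at t)"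
proof -
  have d1: "((\<lambda>\<tau>. (rhof k \<tau>)^2 - x \<bullet> x) has_real_derivative (2 * rhof k t * rhod k t)) (at t)"
    using DERIV_diff[OF DERIV_power[OF rhof_deriv[of k t], of 2] DERIV_const[of "x \<bullet> x"]] by (simp add: mult_ac)
  have d2: "((\<lambda>\<tau>. Pf ((rhof k \<tau>)^2 - x \<bullet> x)) has_real_derivative
       (2 * max 0 ((rhof k t)^2 - x \<bullet> x)) * (2 * rhof k t * rhod k t)) (at t)"
    using DERIV_chain2[OF Pf_deriv d1] .
  have "((\<lambda>\<tau>. - Bf B0 a \<tau> * Pf ((rhof k \<tau>)^2 - x \<bullet> x)) has_real_derivative
     (- (- a * Bf B0 a t) * Pf ((rhof k t)^2 - x \<bullet> x) + ((2 * max 0 ((rhof k t)^2 - x \<bullet> x)) * (2 * rhof k t * rhod k t)) * - Bf B0 a t)) (at t)"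
    by (rule DERIV_mult[OF DERIV_minus[OF Bf_deriv] d2])
  then show ?thesis unfolding hb_def by (simp add: algebra_simps)
qed

definition Hm :: "real \<Rightarrow> real \<Rightarrow> real^'n \<Rightarrow> real^'n^'n" where
  "Hm b q x = (\<chi> i j. 4*b*((if i = j then q else 0) - 2 * x$i * x$j))"

lemma Hm_mult: "Hm b q x *v v = (4*b*q) *\<^sub>R v - (8*b*(x \<bullet> v)) *\<^sub>R x"
proof -
  have *: "(\<Sum>j\<in>UNIV. (if i = j then q else 0) * v $ j) = q * v$i" for i
    by (subst sum.cong[OF refl, of _ _ "\<lambda>j. if i = j then q * v$j else 0"]) auto
  have **: "(\<Sum>j\<in>UNIV. 4 * b * ((if i = j then q else 0) - 2 * x $ i * x $ j) * v $ j)
     = 4 * b * (\<Sum>j\<in>UNIV. (if i = j then q else 0) * v $ j) - 8 * b * x$i * (\<Sum>j\<in>UNIV. x$j * v$j)" for i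
    by (simp add: algebra_simps sum_subtractf sum_distrib_left)
  show ?thesis
  proof (rule vec_eq_iff[THEN iffD2], intro allI)
    fix i
    have "(Hm b q x *v v) $ i = (\<Sum>j\<in>UNIV. 4*b*((if i = j then q else 0) - 2*x$i*x$j) * v$j)"
      unfolding Hm_def matrix_vector_mult_def by simp
    also have "\<dots> = 4*b*(q * v$i) - 8*b*x$i*(x \<bullet> v)" unfolding ** * inner_vec_def by simp
    finally show "(Hm b q x *v v) $ i = ((4*b*q) *\<^sub>R v - (8*b*(x \<bullet> v)) *\<^sub>R x) $ i"
      by (simp add: algebra_simps)
  qed
qed

lemma Hm_quad: "u \<bullet> (Hm b q x *v u) = 4*b*q*(u \<bullet> u) - 8*b*(x \<bullet> u)^2"
  unfolding Hm_mult by (simp add: inner_diff_right power2_eq_square inner_commute algebra_simps)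

lemma Dh_deriv:
  "((\<lambda>y. (4*b*(r - y \<bullet> y)) *\<^sub>R y) has_derivative (\<lambda>v. Hm b (r - x \<bullet> x) x *v v)) (at x)"
proof -
  have "((\<lambda>y. (4*b*(r - y \<bullet> y)) *\<^sub>R y) has_derivative
      (\<lambda>v. (4*b*(r - x \<bullet> x)) *\<^sub>R v + (4*b*(- (x \<bullet> v + v \<bullet> x))) *\<^sub>R x)) (at x)"
    by (auto intro!: derivative_eq_intros)
  then show ?thesis
    by (rule has_derivative_eq_rhs) (auto simp: fun_eq_iff Hm_mult inner_commute algebra_simps)
qed

lemma hb_x_deriv:
  "((\<lambda>y. hb B0 a k (y,t)) has_derivative
     (\<lambda>v. ((4 * Bf B0 a t * max 0 ((rhof k t)^2 - y \<bullet> y)) *\<^sub>R y) \<bullet> v)) (at y)"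
proof -
  have d: "((\<lambda>y. (rhof k t)^2 - y \<bullet> y) has_derivative (\<lambda>v. -(v \<bullet> y + y \<bullet> v))) (at y)"
    by (auto intro!: derivative_eq_intros)
  have "((\<lambda>y. Pf ((rhof k t)^2 - y \<bullet> y)) has_derivative
      (\<lambda>v. -(v \<bullet> y + y \<bullet> v) * (2 * max 0 ((rhof k t)^2 - y \<bullet> y)))) (at y)"
    by (rule DERIV_compose_FDERIV[OF Pf_deriv d])
  then have "((\<lambda>y. - Bf B0 a t * Pf ((rhof k t)^2 - y \<bullet> y)) has_derivative
      (\<lambda>v. - Bf B0 a t * (-(v \<bullet> y + y \<bullet> v) * (2 * max 0 ((rhof k t)^2 - y \<bullet> y))))) (at y)"
    by (rule has_derivative_mult_right)
  then show ?thesis unfolding hb_def fst_conv snd_conv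
    by (rule has_derivative_eq_rhs) (auto simp: fun_eq_iff inner_commute algebra_simps)
qed

lemma Bf_bounds: "a \<ge> 0 \<Longrightarrow> B0 \<ge> 0 \<Longrightarrow> t \<ge> -1 \<Longrightarrow> 0 \<le> Bf B0 a t \<and> Bf B0 a t \<le> B0"
proof -
  assume a: "a \<ge> 0" "B0 \<ge> 0" "t \<ge> -1"
  then have "a * (t+1) \<ge> 0" by simp
  then have "exp (-(a*(t+1))) \<le> 1" by simp
  then show ?thesis unfolding Bf_def using a by (simp add: mult_left_le)
qed

lemma rhof_bounds: "k \<ge> 0 \<Longrightarrow> t \<ge> -1 \<Longrightarrow> 0 \<le> rhof k t \<and> rhof k t \<le> 9/10"
proof -
  assume a: "k \<ge> 0" "t \<ge> -1"
  then have "k * (t+1) \<ge> 0" by simp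
  then have "exp (-(k*(t+1))) \<le> 1" by simp
  moreover have "exp (-(k*(t+1))) > 0" by simp
  ultimately show ?thesis unfolding rhof_def by simp
qed

lemma rhod_bounds: "k \<ge> 0 \<Longrightarrow> t \<ge> -1 \<Longrightarrow> 0 \<le> rhod k t \<and> rhod k t \<le> k"
proof -
  assume a: "k \<ge> 0" "t \<ge> -1"
  then have "k * (t+1) \<ge> 0" by simp
  then have e: "exp (-(k*(t+1))) \<le> 1" by simp
  have "9/10 * k * exp (-(k*(t+1))) \<le> 9/10 * k * 1" using e a by (intro mult_left_mono) auto
  then show ?thesis unfolding rhod_def using a by simp
qed

lemma hb_full_deriv:
  fixes p :: "(real^'n) \<times> real"
  shows "(hb B0 a k has_derivative (\<lambda>w.
     - Bf B0 a (snd p) * ((2 * rhof k (snd p) * (snd w * rhod k (snd p)) - (fst w \<bullet> fst p + fst p \<bullet> fst w))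
          * (2 * max 0 ((rhof k (snd p))^2 - fst p \<bullet> fst p)))
     + (- (snd w * (- a * Bf B0 a (snd p)))) * Pf ((rhof k (snd p))^2 - fst p \<bullet> fst p))) (at p)"
proof -
  have sn: "((\<lambda>p::(real^'n) \<times> real. snd p) has_derivative (\<lambda>w. snd w)) (at p)"
    by (rule has_derivative_snd[OF has_derivative_ident])
  have dB: "((\<lambda>p. Bf B0 a (snd p)) has_derivative (\<lambda>w. snd w * (- a * Bf B0 a (snd p)))) (at p)"
    by (rule DERIV_compose_FDERIV[OF Bf_deriv sn])
  have dR: "((\<lambda>p. rhof k (snd p)) has_derivative (\<lambda>w. snd w * rhod k (snd p))) (at p)"
    by (rule DERIV_compose_FDERIV[OF rhof_deriv sn])
  have dq: "((\<lambda>p. (rhof k (snd p))^2 - fst p \<bullet> fst p) has_derivative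
     (\<lambda>w. 2 * rhof k (snd p) * (snd w * rhod k (snd p)) - (fst w \<bullet> fst p + fst p \<bullet> fst w))) (at p)"
    by (auto intro!: derivative_eq_intros dR simp: mult_ac)
  have dP: "((\<lambda>p. Pf ((rhof k (snd p))^2 - fst p \<bullet> fst p)) has_derivative
     (\<lambda>w. (2 * rhof k (snd p) * (snd w * rhod k (snd p)) - (fst w \<bullet> fst p + fst p \<bullet> fst w))
          * (2 * max 0 ((rhof k (snd p))^2 - fst p \<bullet> fst p)))) (at p)"
    by (rule DERIV_compose_FDERIV[OF Pf_deriv dq])
  have "((\<lambda>p. - Bf B0 a (snd p) * Pf ((rhof k (snd p))^2 - fst p \<bullet> fst p)) has_derivative (\<lambda>w.
     - Bf B0 a (snd p) * ((2 * rhof k (snd p) * (snd w * rhod k (snd p)) - (fst w \<bullet> fst p + fst p \<bullet> fst w))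
          * (2 * max 0 ((rhof k (snd p))^2 - fst p \<bullet> fst p)))
     + (- (snd w * (- a * Bf B0 a (snd p)))) * Pf ((rhof k (snd p))^2 - fst p \<bullet> fst p))) (at p)"
    by (rule has_derivative_mult[OF has_derivative_minus[OF dB] dP])
  then show ?thesis unfolding hb_def[abs_def] .
qed

lemma hb_lipschitz:
  fixes R :: real
  assumes a: "a \<ge> 0" and B0: "B0 \<ge> 0" and k: "k \<ge> 0" and R: "R \<ge> 0"
  shows "(B0*(a + 4*k + 4*R))-lipschitz_on (cball 0 R \<times> {-1..0}) (hb B0 a k :: (real^'n) \<times> real \<Rightarrow> real)"
proof (rule lipschitz_onI)
  let ?S = "cball (0::real^'n) R \<times> {-1..(0::real)}"
  let ?L = "B0*(a + 4*k + 4*R)"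
  show "0 \<le> ?L" using a B0 k R by simp
  define D where "D = (\<lambda>(p::(real^'n) \<times> real) w.
     - Bf B0 a (snd p) * ((2 * rhof k (snd p) * (snd w * rhod k (snd p)) - (fst w \<bullet> fst p + fst p \<bullet> fst w))
          * (2 * max 0 ((rhof k (snd p))^2 - fst p \<bullet> fst p)))
     + (- (snd w * (- a * Bf B0 a (snd p)))) * Pf ((rhof k (snd p))^2 - fst p \<bullet> fst p))"
  have der: "(hb B0 a k has_derivative D p) (at p within ?S)" if "p \<in> ?S" for p
    unfolding D_def using hb_full_deriv[of B0 a k p] by (simp add: has_derivative_at_withinI)
  have bnd: "onorm (D p) \<le> ?L" if "p \<in> ?S" for p
  proof (rule onorm_le)
    fix w :: "(real^'n) \<times> real"
    obtain x0 t where p: "p = (x0,t)" by (cases p)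
    have hx: "norm x0 \<le> R" "-1 \<le> t" "t \<le> 0" using that p by auto
    define B where "B = Bf B0 a t"
    define r where "r = rhof k t"
    define rd where "rd = rhod k t"
    define q where "q = r^2 - x0 \<bullet> x0"
    define m where "m = max 0 q"
    define sw where "sw = snd w"
    define xf where "xf = x0 \<bullet> fst w"
    define nw where "nw = norm w"
    have Bb: "0 \<le> B" "B \<le> B0" using Bf_bounds[OF a B0 hx(2)] unfolding B_def by auto
    have rb: "0 \<le> r" "r \<le> 1" using rhof_bounds[OF k hx(2)] unfolding r_def by auto
    have rdb: "0 \<le> rd" "rd \<le> k" using rhod_bounds[OF k hx(2)] unfolding rd_def by auto
    have "r^2 \<le> 1" using rb by (simp add: power_le_one)
    then have q1: "q \<le> 1" using inner_ge_zero[of x0] unfolding q_def by linarith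
    have mb: "0 \<le> m" "m \<le> 1" unfolding m_def using q1 by auto
    have Pq: "Pf q = m^2" unfolding Pf_def m_def ..
    have Pb: "0 \<le> Pf q" "Pf q \<le> 1" unfolding Pq using mb by (auto simp: power_le_one)
    have nf: "norm (fst w) \<le> nw" unfolding nw_def by (cases w) (simp add: norm_fst_le)
    have ns: "\<bar>sw\<bar> \<le> nw" unfolding nw_def sw_def by (cases w) (metis norm_snd_le real_norm_def snd_conv)
    have nw0: "0 \<le> nw" unfolding nw_def by simp
    have xfb: "\<bar>xf\<bar> \<le> R * nw"
    proof -
      have "\<bar>xf\<bar> \<le> norm x0 * norm (fst w)" unfolding xf_def by (rule Cauchy_Schwarz_ineq2)
      also have "\<dots> \<le> R * nw" using hx(1) nf R by (intro mult_mono) auto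
      finally show ?thesis .
    qed
    have rrd: "r * rd \<le> k" using rb rdb mult_mono[of r 1 rd k] by simp
    have t1: "\<bar>2 * r * (sw * rd)\<bar> \<le> 2 * k * nw"
    proof -
      have "\<bar>2 * r * (sw * rd)\<bar> = 2 * (r * rd) * \<bar>sw\<bar>" using rb rdb by (simp add: abs_mult)
      also have "\<dots> \<le> 2 * k * nw" using rrd ns rb rdb by (intro mult_mono) auto
      finally show ?thesis .
    qed
    define E where "E = 2 * r * (sw * rd) - (fst w \<bullet> x0 + x0 \<bullet> fst w)"
    have Eb: "\<bar>E\<bar> \<le> 2 * k * nw + 2 * R * nw"
    proof -
      have "E = 2 * r * (sw * rd) - 2 * xf" unfolding E_def xf_def by (simp add: inner_commute)
      then show ?thesis using t1 xfb by linarith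
    qed
    have "D p w = - B * (E * (2 * m)) + (sw * a * B) * Pf q"
      unfolding D_def p B_def r_def rd_def E_def m_def q_def sw_def by simp
    moreover have "\<bar>- B * (E * (2 * m)) + (sw * a * B) * Pf q\<bar> \<le> \<bar>- B * (E * (2 * m))\<bar> + \<bar>(sw * a * B) * Pf q\<bar>"
      by (rule abs_triangle_ineq)
    moreover have "\<bar>- B * (E * (2 * m))\<bar> = B * (\<bar>E\<bar> * (2 * m))" using Bb mb by (simp add: abs_mult)
    moreover have "\<bar>(sw * a * B) * Pf q\<bar> = (\<bar>sw\<bar> * a * B) * Pf q" using Bb Pb a by (simp add: abs_mult)
    ultimately have "\<bar>D p w\<bar> \<le> B * (\<bar>E\<bar> * (2 * m)) + (\<bar>sw\<bar> * a * B) * Pf q" by simp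
    also have "\<dots> \<le> B0 * ((2 * k * nw + 2 * R * nw) * 2) + (nw * a * B0) * 1"
    proof -
      have kn: "0 \<le> 2 * k * nw + 2 * R * nw" using k R nw0 by simp
      have e1: "\<bar>E\<bar> * (2 * m) \<le> (2 * k * nw + 2 * R * nw) * 2"
        by (rule mult_mono[OF Eb]) (use mb kn in auto)
      have A1: "B * (\<bar>E\<bar> * (2 * m)) \<le> B0 * ((2 * k * nw + 2 * R * nw) * 2)"
        by (rule mult_mono[OF Bb(2) e1]) (use B0 mb in auto)
      have e2: "\<bar>sw\<bar> * a * B \<le> nw * a * B0"
        by (rule mult_mono[OF mult_right_mono[OF ns a] Bb(2)]) (use nw0 a Bb in auto)
      have A2: "(\<bar>sw\<bar> * a * B) * Pf q \<le> (nw * a * B0) * 1"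
        by (rule mult_mono[OF e2 Pb(2)]) (use nw0 a B0 Pb in auto)
      show ?thesis using A1 A2 by linarith
    qed
    also have "\<dots> = ?L * nw" by (simp add: algebra_simps)
    finally show "norm (D p w) \<le> ?L * norm w" unfolding nw_def by simp
  qed
  fix x y assume "x \<in> ?S" "y \<in> ?S"
  have "convex ?S" by (intro convex_Times convex_cball convex_box) (simp add: convex_real_interval)
  from differentiable_bound[OF this der bnd \<open>x \<in> ?S\<close> \<open>y \<in> ?S\<close>]
  show "dist (hb B0 a k x) (hb B0 a k y) \<le> ?L * dist x y" by (simp add: dist_norm)
qed

lemma hess_matrix_mult:
  fixes L :: "(real^'n) \<times> real \<Rightarrow> (real^'n) \<times> real"
  assumes "linear L"
  shows "(\<chi> i j. fst (L (axis j 1, 0)) $ i) *v u = fst (L (u, 0))"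
proof -
  have "(u, 0::real) = (\<Sum>j\<in>UNIV. u$j *\<^sub>R (axis j 1, 0::real))"
  proof -
    have "(\<Sum>j\<in>UNIV. u$j *\<^sub>R (axis j (1::real), 0::real)) = (\<Sum>j\<in>UNIV. u$j *\<^sub>R axis j 1, 0)"
      by (simp add: prod_eq_iff fst_sum snd_sum)
    also have "(\<Sum>j\<in>UNIV. u$j *\<^sub>R axis j (1::real)) = u"
      using basis_expansion[of u] by (simp add: scalar_mult_eq_scaleR)
    finally show ?thesis by simp
  qed
  then have "L (u, 0) = L (\<Sum>j\<in>UNIV. u$j *\<^sub>R (axis j 1, 0))" by (rule arg_cong)
  also have "\<dots> = (\<Sum>j\<in>UNIV. L (u$j *\<^sub>R (axis j 1, 0)))" by (rule linear_sum[OF assms])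
  also have "\<dots> = (\<Sum>j\<in>UNIV. u$j *\<^sub>R L (axis j 1, 0))"
    by (rule sum.cong[OF refl]) (rule linear_scale[OF assms])
  finally have "L (u, 0) = (\<Sum>j\<in>UNIV. u$j *\<^sub>R L (axis j 1, 0))" .
  then have "fst (L (u, 0)) = (\<Sum>j\<in>UNIV. u$j *\<^sub>R fst (L (axis j 1, 0)))"
    by (simp add: fst_sum)
  then show ?thesis
    by (simp add: matrix_vector_mult_def vec_eq_iff mult.commute)
qed

lemma visc_point:
  fixes \<theta> h :: "(real^'n) \<times> real \<Rightarrow> real" and G :: "(real^'n) \<times> real \<Rightarrow> (real^'n) \<times> real"
    and G' :: "(real^'n) \<times> real \<Rightarrow> (real^'n) \<times> real \<Rightarrow> (real^'n) \<times> real"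
    and Dh :: "real^'n \<Rightarrow> real^'n" and H :: "real^'n^'n"
  assumes U: "open U" "(x0,t0) \<in> U"
    and d\<theta>: "\<forall>q\<in>U. (\<theta> has_derivative (\<lambda>v. G q \<bullet> v)) (at q) \<and> (G has_derivative G' q) (at q)"
    and le: "\<forall>q\<in>U. \<theta> q \<le> h q" and eq: "\<theta> (x0,t0) = h (x0,t0)"
    and V: "open V" "x0 \<in> V" and dh: "\<forall>y\<in>V. ((\<lambda>y. h (y,t0)) has_derivative (\<lambda>v. Dh y \<bullet> v)) (at y)"
    and dDh: "(Dh has_derivative (\<lambda>v. H *v v)) (at x0)"
    and dht: "((\<lambda>\<tau>. h (x0,\<tau>)) has_real_derivative ht) (at t0)"
  shows "fst (G (x0,t0)) = Dh x0" "snd (G (x0,t0)) = ht"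
    "\<forall>u. u \<bullet> ((\<chi> i j. fst (G' (x0,t0) (axis j 1, 0)) $ i) *v u) \<le> u \<bullet> (H *v u)"
    "\<forall>i j. (\<chi> i j. fst (G' (x0,t0) (axis j 1, 0)) $ i) $ i $ j = (\<chi> i j. fst (G' (x0,t0) (axis j 1, 0)) $ i) $ j $ i"
proof -
  let ?p = "(x0,t0)"
  have lin: "linear (G' ?p)" using d\<theta> U has_derivative_linear by blast
  define W where "W = {y. (y,t0) \<in> U} \<inter> V"
  have W: "open W" "x0 \<in> W"
  proof -
    have c: "continuous_on UNIV (\<lambda>y::real^'n. (y,t0))" by (intro continuous_intros)
    have "open ((\<lambda>y::real^'n. (y,t0)) -` U \<inter> UNIV)"
      using continuous_on_open_vimage[OF open_UNIV] c U(1) by blast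
    moreover have "(\<lambda>y::real^'n. (y,t0)) -` U \<inter> UNIV = {y. (y,t0) \<in> U}" by auto
    ultimately have "open {y. (y,t0) \<in> U}" by simp
    then show "open W" unfolding W_def using V by auto
    show "x0 \<in> W" unfolding W_def using U V by auto
  qed
  have pairD: "((\<lambda>y. (y, t0)) has_derivative (\<lambda>v. (v, 0))) (at y)" for y :: "real^'n"
    by (intro derivative_eq_intros) auto
  have dk\<theta>: "\<forall>y\<in>W. ((\<lambda>y. \<theta> (y,t0)) has_derivative (\<lambda>v. fst (G (y,t0)) \<bullet> v)) (at y)"
  proof
    fix y assume "y \<in> W"
    then have "(y,t0) \<in> U" unfolding W_def by simp
    then have "(\<theta> has_derivative (\<lambda>v. G (y,t0) \<bullet> v)) (at (y,t0))" using d\<theta> by blast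
    from has_derivative_compose[OF pairD[of y] this]
    show "((\<lambda>y. \<theta> (y,t0)) has_derivative (\<lambda>v. fst (G (y,t0)) \<bullet> v)) (at y)"
      by (simp add: o_def inner_Pair_0)
  qed
  have dGp: "(G has_derivative G' ?p) (at ?p)" using d\<theta> U by blast
  have dG: "((\<lambda>y. G (y,t0)) has_derivative (\<lambda>v. G' ?p (v,0))) (at x0)"
    using has_derivative_compose[OF pairD[of x0] dGp] .
  have dkh: "\<forall>y\<in>W. ((\<lambda>y. h (y,t0)) has_derivative (\<lambda>v. Dh y \<bullet> v)) (at y)"
    using dh unfolding W_def by blast
  have LF: "(Dh x0 - fst (G ?p)) \<bullet> u = 0 \<and> fst (G' ?p (u,0)) \<bullet> u \<le> (H *v u) \<bullet> u" for u
  proof -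
    have dH\<theta>: "((\<lambda>y. fst (G (y,t0)) \<bullet> u) has_derivative (\<lambda>v. fst (G' ?p (v,0)) \<bullet> u)) (at x0)"
      by (rule has_derivative_inner_left[OF has_derivative_fst[OF dG]])
    have dHh: "((\<lambda>y. Dh y \<bullet> u) has_derivative (\<lambda>v. (H *v v) \<bullet> u)) (at x0)"
      by (rule has_derivative_inner_left[OF dDh])
    obtain \<delta>1 where d1: "\<delta>1 > 0" "\<forall>s. \<bar>s\<bar> < \<delta>1 \<longrightarrow> x0 + s *\<^sub>R u \<in> W \<and>
        ((\<lambda>s. \<theta> (x0 + s *\<^sub>R u, t0)) has_real_derivative fst (G (x0 + s *\<^sub>R u, t0)) \<bullet> u) (at s)"
      using line_derivs(1)[OF W dk\<theta>, of u] dH\<theta> by blast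
    have d1': "((\<lambda>s. fst (G (x0 + s *\<^sub>R u, t0)) \<bullet> u) has_real_derivative fst (G' ?p (u,0)) \<bullet> u) (at 0)"
      using line_derivs(2)[OF W dk\<theta> dH\<theta>] by simp
    obtain \<delta>2 where d2: "\<delta>2 > 0" "\<forall>s. \<bar>s\<bar> < \<delta>2 \<longrightarrow> x0 + s *\<^sub>R u \<in> W \<and>
        ((\<lambda>s. h (x0 + s *\<^sub>R u, t0)) has_real_derivative Dh (x0 + s *\<^sub>R u) \<bullet> u) (at s)"
      using line_derivs(1)[OF W dkh, of u] dHh by blast
    have d2': "((\<lambda>s. Dh (x0 + s *\<^sub>R u) \<bullet> u) has_real_derivative (H *v u) \<bullet> u) (at 0)"
      using line_derivs(2)[OF W dkh dHh] by simp
    define \<delta> where "\<delta> = min \<delta>1 \<delta>2"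
    have \<delta>0: "\<delta> > 0" using d1 d2 unfolding \<delta>_def by simp
    let ?f = "\<lambda>s. h (x0 + s *\<^sub>R u, t0) - \<theta> (x0 + s *\<^sub>R u, t0)"
    let ?f1 = "\<lambda>s. Dh (x0 + s *\<^sub>R u) \<bullet> u - fst (G (x0 + s *\<^sub>R u, t0)) \<bullet> u"
    have D1: "\<forall>s. \<bar>s\<bar> < \<delta> \<longrightarrow> (?f has_real_derivative ?f1 s) (at s)"
      using d1 d2 unfolding \<delta>_def by (auto intro!: DERIV_diff)
    have D2: "(?f1 has_real_derivative ((H *v u) \<bullet> u - fst (G' ?p (u,0)) \<bullet> u)) (at 0)"
      by (intro DERIV_diff d1' d2')
    have mn: "\<forall>s. \<bar>s\<bar> < \<delta> \<longrightarrow> ?f 0 \<le> ?f s"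
    proof (intro allI impI)
      fix s :: real assume "\<bar>s\<bar> < \<delta>"
      then have "x0 + s *\<^sub>R u \<in> W" using d1 unfolding \<delta>_def by auto
      then have "(x0 + s *\<^sub>R u, t0) \<in> U" unfolding W_def by simp
      then show "?f 0 \<le> ?f s" using le eq by fastforce
    qed
    have "?f1 0 = 0" "0 \<le> (H *v u) \<bullet> u - fst (G' ?p (u,0)) \<bullet> u"
      using second_order_min[OF \<delta>0 D1 D2 mn] by auto
    then show ?thesis by (simp add: inner_diff_left)
  qed
  show "fst (G ?p) = Dh x0"
    using LF[of "Dh x0 - fst (G ?p)"] by simp
  show "\<forall>u. u \<bullet> ((\<chi> i j. fst (G' ?p (axis j 1, 0)) $ i) *v u) \<le> u \<bullet> (H *v u)"
    using LF by (simp add: hess_matrix_mult[OF lin] inner_commute)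
  show "snd (G ?p) = ht"
  proof -
    obtain r where r: "r > 0" "ball ?p r \<subseteq> U" using U open_contains_ball by blast
    have pairT: "((\<lambda>\<tau>. (x0, \<tau>)) has_derivative (\<lambda>h. (0, h))) (at \<tau>)" for \<tau> :: real
      by (intro derivative_eq_intros) auto
    have "(\<theta> has_derivative (\<lambda>v. G ?p \<bullet> v)) (at ?p)" using d\<theta> U by blast
    from has_derivative_compose[OF pairT this]
    have "((\<lambda>\<tau>. \<theta> (x0, \<tau>)) has_derivative (\<lambda>h. snd (G ?p) * h)) (at t0)"
      by (simp add: o_def inner_Pair_0)
    moreover have "(\<lambda>h::real. snd (G ?p) * h) = (*) (snd (G ?p))" by (rule ext) simp
    ultimately have dt\<theta>: "((\<lambda>\<tau>. \<theta> (x0, \<tau>)) has_real_derivative snd (G ?p)) (at t0)"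
      unfolding has_field_derivative_def by metis
    have "((\<lambda>\<tau>. h (x0,\<tau>) - \<theta> (x0,\<tau>)) has_real_derivative ht - snd (G ?p)) (at t0)"
      by (intro DERIV_diff dht dt\<theta>)
    moreover have "\<forall>y. \<bar>t0 - y\<bar> < r \<longrightarrow> h (x0,t0) - \<theta> (x0,t0) \<le> h (x0,y) - \<theta> (x0,y)"
    proof (intro allI impI)
      fix y assume "\<bar>t0 - y\<bar> < r"
      then have "(x0, y) \<in> ball ?p r" by (simp add: dist_Pair_Pair dist_real_def)
      then have "(x0,y) \<in> U" using r by blast
      then show "h (x0,t0) - \<theta> (x0,t0) \<le> h (x0,y) - \<theta> (x0,y)" using le eq by fastforce
    qed
    ultimately have "ht - snd (G ?p) = 0" using DERIV_local_min r(1) by blast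
    then show ?thesis by simp
  qed
  show "\<forall>i j. (\<chi> i j. fst (G' ?p (axis j 1, 0)) $ i) $ i $ j = (\<chi> i j. fst (G' ?p (axis j 1, 0)) $ i) $ j $ i"
  proof (intro allI)
    fix i j :: 'n
    have d\<theta>': "\<forall>q\<in>U. (\<theta> has_derivative (\<lambda>v. G q \<bullet> v)) (at q)" using d\<theta> by blast
    have s: "G' ?p (axis j 1, 0) \<bullet> (axis i 1, 0) = G' ?p (axis i 1, 0) \<bullet> (axis j 1, 0)"
      using hessian_sym[OF U d\<theta>'] d\<theta> U by blast
    then show "(\<chi> i j. fst (G' ?p (axis j 1, 0)) $ i) $ i $ j = (\<chi> i j. fst (G' ?p (axis j 1, 0)) $ i) $ j $ i"
      by (simp add: inner_Pair_0 inner_axis)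
  qed
qed

lemma barrier_arith:
  fixes lam Lam nn k rho1 rho rd q s b a :: real
  assumes lam: "lam > 0" and Lam: "Lam \<ge> 0" and nn: "nn \<ge> 0" and k: "k \<ge> 0"
    and r1: "rho1 > 0" "rho1 \<le> rho" and rd: "0 \<le> rd" "rd \<le> k"
    and q: "q > 0" and s: "s \<ge> 0" and qs: "q + s = rho^2" and b: "b \<ge> 0"
    and a: "a = (4*(Lam*nn + k) + 1) / (2*rho1^2/3) + (4*(Lam*nn + k) + 12*lam)^2 / (16*lam*rho1^2)"
  shows "Lam*nn*(4*b*q) + lam * min 0 (4*b*(q - 2 * s)) - (a*b*q^2 - 4*b*q*rd)
          \<le> - b * min (2*rho1^2/3) (4*lam*rho1^2)"
proof -
  define C0 where "C0 = 4*(Lam*nn + k)"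
  define q1 where "q1 = 2*rho1^2/3"
  define D where "D = C0 + 12*lam"
  define L where "L = lam*rho1^2"
  define m0 where "m0 = min q1 (4*L)"
  define a1 where "a1 = (C0 + 1) / q1"
  define a2 where "a2 = D^2 / (16*L)"
  have L0: "L > 0" unfolding L_def using lam r1 by simp
  have q10: "q1 > 0" unfolding q1_def using r1 by simp
  have C00: "C0 \<ge> 0" unfolding C0_def using Lam nn k by simp
  have aa: "a = a1 + a2" unfolding a a1_def a2_def C0_def q1_def D_def L_def by (simp add: mult.assoc)
  have a10: "a1 \<ge> 0" unfolding a1_def using C00 q10 by simp
  have a20: "a2 \<ge> 0" unfolding a2_def using L0 by simp
  have rr: "rho1^2 \<le> rho^2" using r1 by (simp add: power_mono)
  define X where "X = 4*Lam*nn*q + 4*lam * min 0 (q - 2 * s) - a*q^2 + 4*q*rd"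
  have C0q: "4*Lam*nn*q + 4*q*rd \<le> C0*q"
  proof -
    have "4*q*rd \<le> 4*q*k" using rd q by (simp add: mult_left_mono)
    then show ?thesis unfolding C0_def by (simp add: algebra_simps)
  qed
  have X: "X \<le> - m0"
  proof (cases "q \<ge> 2 * s")
    case True
    then have mn: "min 0 (q - 2 * s) = 0" by simp
    have qq1: "q \<ge> q1" using True qs rr unfolding q1_def by linarith
    have "a1 * q \<ge> a1 * q1" using qq1 a10 by (simp add: mult_left_mono)
    moreover have "a1 * q1 = C0 + 1" unfolding a1_def using q10 by simp
    ultimately have a1q: "a1 * q \<ge> C0 + 1" by simp
    have "X \<le> C0*q - a*q^2" unfolding X_def mn using C0q by simp
    also have "\<dots> \<le> C0*q - a1*q^2"
    proof -
      have "a2 * q^2 \<ge> 0" using a20 by simp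
      then show ?thesis unfolding aa by (simp add: algebra_simps)
    qed
    also have "\<dots> = q * (C0 - a1*q)" by (simp add: algebra_simps power2_eq_square)
    also have "\<dots> \<le> q * (-1)" using a1q q by (intro mult_left_mono) auto
    also have "\<dots> \<le> - q1" using qq1 by simp
    also have "\<dots> \<le> - m0" unfolding m0_def by simp
    finally show ?thesis .
  next
    case False
    then have mn: "min 0 (q - 2 * s) = q - 2 * s" by simp
    have "4*lam*(q - 2 * s) = 12*lam*q - 8*lam*(q + s)" by (simp add: algebra_simps)
    also have "\<dots> = 12*lam*q - 8*lam*rho^2" using qs by simp
    finally have "4*lam*(q - 2 * s) = 12*lam*q - 8*lam*rho^2" .
    moreover have "12*lam*q - 8*lam*rho^2 \<le> 12*lam*q - 8*L" unfolding L_def using rr lam by (simp add: mult_left_mono)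
    ultimately have h1: "4*lam*(q - 2 * s) \<le> 12*lam*q - 8*L" by simp
    have "X \<le> C0*q + 12*lam*q - 8*L - a*q^2" unfolding X_def mn using C0q h1 by linarith
    also have "\<dots> \<le> D*q - a2*q^2 - 8*L"
    proof -
      have "a1 * q^2 \<ge> 0" using a10 by simp
      then show ?thesis unfolding aa D_def by (simp add: algebra_simps)
    qed
    also have "\<dots> \<le> 4*L - 8*L"
    proof -
      have "a2*q^2 - D*q + 4*L = (D*q - 8*L)^2 / (16*L)"
        unfolding a2_def using L0 by (simp add: field_simps power2_eq_square)
      moreover have "(D*q - 8*L)^2 / (16*L) \<ge> 0" using L0 by simp
      ultimately show ?thesis by linarith
    qed
    also have "\<dots> = - (4*L)" by simp
    also have "\<dots> \<le> - m0" unfolding m0_def by simp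
    finally show ?thesis .
  qed
  have "Lam*nn*(4*b*q) + lam * min 0 (4*b*(q - 2 * s)) - (a*b*q^2 - 4*b*q*rd) = b * X"
  proof -
    have "min 0 (4*b*(q - 2 * s)) = 4*b * min 0 (q - 2 * s)"
    proof (cases "q - 2 * s \<ge> 0")
      case True
      then show ?thesis using b by simp
    next
      case False
      then have "4*b*(q - 2 * s) \<le> 0" using b by (simp add: mult_nonneg_nonpos)
      then show ?thesis using False by simp
    qed
    then show ?thesis unfolding X_def by (simp add: algebra_simps)
  qed
  also have "\<dots> \<le> b * (- m0)" using X b by (rule mult_left_mono)
  finally show ?thesis unfolding m0_def q1_def L_def by simp
qed

lemma linf_ge: "\<bar>x $ i\<bar> \<le> linf x"
  unfolding linf_def by (rule Max_ge) auto

lemma linf_attained: "\<exists>i. linf x = \<bar>x $ i\<bar>"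
proof -
  have "linf x \<in> range (\<lambda>i. \<bar>x $ i\<bar>)" unfolding linf_def by (rule Max_in) auto
  then show ?thesis by auto
qed

lemma norm_le_linf: "norm (x::real^'n) \<le> real CARD('n) * linf x"
proof -
  have "norm x \<le> (\<Sum>i\<in>UNIV. \<bar>x$i\<bar>)" by (rule norm_le_l1_cart)
  also have "\<dots> \<le> (\<Sum>i\<in>(UNIV::'n set). linf x)" by (rule sum_mono) (rule linf_ge)
  finally show ?thesis by simp
qed

lemma inner_le_linf: 
  fixes x :: "real^'n"
  assumes "\<forall>i. \<bar>x $ i\<bar> \<le> d"
  shows "x \<bullet> x \<le> real CARD('n) * d^2"
proof -
  have "x \<bullet> x = (\<Sum>i\<in>UNIV. (x$i)^2)" by (simp add: inner_vec_def power2_eq_square)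
  also have "\<dots> \<le> (\<Sum>i\<in>(UNIV::'n set). d^2)"
  proof (rule sum_mono)
    fix i
    have "\<bar>x$i\<bar>^2 \<le> d^2" using assms by (intro power_mono) auto
    then show "(x$i)^2 \<le> d^2" by simp
  qed
  finally show ?thesis by simp
qed

lemma exp_neg_le_recip: "(y::real) \<ge> 0 \<Longrightarrow> exp (- y) \<le> 1 / (1 + y)"
proof -
  assume y: "y \<ge> 0"
  have "1 + y \<le> exp y" by (rule exp_ge_add_one_self)
  then have "1 / exp y \<le> 1 / (1 + y)" using y by (intro divide_left_mono) auto
  then show ?thesis by (simp add: exp_minus divide_inverse)
qed

lemma rhof_lower:
  assumes c: "0 < c" "c \<le> 1" and k: "k > 0" and t: "k * (t+1) \<ge> c/4"
  shows "rhof k t \<ge> 9*c/50"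
proof -
  have "exp (-(k*(t+1))) \<le> exp (-(c/4))" using t by simp
  also have "\<dots> \<le> 1 / (1 + c/4)" using c by (intro exp_neg_le_recip) auto
  finally have e: "exp (-(k*(t+1))) \<le> 1 / (1 + c/4)" .
  have "1 - 1 / (1 + c/4) = (c/4) / (1 + c/4)" using c by (simp add: field_simps)
  also have "\<dots> \<ge> c/5" using c by (simp add: field_simps)
  finally have "1 - exp (-(k*(t+1))) \<ge> c/5" using e by linarith
  then show ?thesis unfolding rhof_def by simp
qed

lemma rhof_upper:
  assumes k: "k \<ge> 0" and t: "t \<ge> -1"
  shows "rhof k t \<le> 9/10 * (k * (t+1))"
proof -
  have "1 + (-(k*(t+1))) \<le> exp (-(k*(t+1)))" by (rule exp_ge_add_one_self)
  then have "1 - exp (-(k*(t+1))) \<le> k*(t+1)" by simp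
  then show ?thesis unfolding rhof_def by simp
qed

theorem lemma3p1:
  fixes lam Lam Lam0 :: real and phi eta :: "real \<Rightarrow> real"
  assumes "0 < lam" and "lam \<le> Lam"
    and "\<forall>t\<ge>0. phi t = eta t * t"
    and "\<forall>t\<ge>0. eta t \<ge> 1"
    and "strict_mono_on {0..} phi"
    and "\<forall>t>0. \<exists>e>0. \<exists>L. L-lipschitz_on ({t-e..t+e} \<inter> {0<..}) phi"
    and "\<forall>t\<ge>0. phi t \<ge> t"
    and "\<forall>s t. 0 < s \<and> s \<le> t \<and> t < 1 \<longrightarrow> eta t \<le> eta s"
    and "\<forall>s t. 1 \<le> s \<and> s \<le> t \<longrightarrow> eta s \<le> eta t"
    and "\<forall>\<^sub>F t in at_top. eta differentiable (at t)"
    and "((\<lambda>t. t * deriv eta t / eta t * ln (eta t)) \<longlongrightarrow> 0) at_top"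
    and "\<forall>s>0. \<forall>t>0. eta (s * t) \<le> Lam0 * eta s * eta t"
  shows "\<exists>r0>0. \<exists>h :: (real^'n) \<times> real \<Rightarrow> real.
           (\<exists>L. L-lipschitz_on (Q1 \<union> parab_bdry) h) \<and>
           (\<forall>p\<in>Q1. h p \<le> 0) \<and>
           C2x_on {p\<in>Q1. h p < 0} h \<and>
           (\<forall>r. 0 < r \<and> r \<le> r0 \<longrightarrow>
              (\<exists>g. continuous_on Q1 g \<and> bounded (g ` Q1) \<and>
                   Q1 \<inter> closure {p\<in>Q1. g p \<noteq> 0} \<subseteq> K1 \<and>
                   visc_ineq lam Lam (\<lambda>s. Lam0 * r * eta (1/r) * phi s) h g)) \<and>
           (\<forall>p\<in>K3. h p \<le> -2) \<and>
           (\<forall>p\<in>parab_bdry. h p = 0)"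
proof -
  note lam = assms(1) and lamLam = assms(2) and phidef = assms(3) and etapos = assms(4)
    and phimono = assms(5) and phige = assms(7) and etadiff = assms(10) and etalim = assms(11)
    and etamult = assms(12)
  have Lam: "Lam > 0" using lam lamLam by simp
  define n where "n = real CARD('n)"
  have n1: "n \<ge> 1" unfolding n_def by simp
  define c where "c = cn TYPE('n)"
  have cdef: "c = 1 / (10 * n)" unfolding c_def n_def cn_def by simp
  have c0: "c > 0" using n1 cdef by simp
  have c1: "c \<le> 1/10" unfolding cdef using n1 by (intro divide_left_mono) auto
  have nc: "n * c = 1/10" using n1 cdef by simp
  define k where "k = 100 / c^2"
  have k0: "k > 0" using c0 unfolding k_def by simp
  have kc2: "k * c^2 = 100" using c0 unfolding k_def by simp
  define rho1 where "rho1 = 9*c/50"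
  have rho10: "rho1 > 0" using c0 unfolding rho1_def by simp
  define a where "a = (4*(Lam*n + k) + 1) / (2*rho1^2/3) + (4*(Lam*n + k) + 12*lam)^2 / (16*lam*rho1^2)"
  have a0: "a \<ge> 0" unfolding a_def using lam Lam k0 n1 rho10 by (intro add_nonneg_nonneg divide_nonneg_pos) auto
  define B0 where "B0 = 5 * exp a"
  have B00: "B0 > 0" unfolding B0_def by simp
  define m0 where "m0 = min (2*rho1^2/3) (4*lam*rho1^2)"
  have m00: "m0 > 0" unfolding m0_def using rho10 lam by simp
  have phiB: "phi (4*B0) > 0" using phige[rule_format, of "4*B0"] B00 by linarith
  define kap0 where "kap0 = B0 * exp (-a) * m0 / phi (4*B0)"
  have kap00: "kap0 > 0" unfolding kap0_def using B00 m00 phiB by simp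
  have kap0phi: "kap0 * phi (4*B0) = B0 * exp (-a) * m0" unfolding kap0_def using phiB by simp
  define G1 where "G1 = 4*B0*(Lam*n + k) + kap0 * phi (4*B0)"
  have G10: "G1 \<ge> 0" unfolding G1_def using B00 Lam n1 k0 kap00 phiB by simp
  define T1 where "T1 = -1 + c/(4*k)"
  define T1' where "T1' = -1 + c/(2*k)"
  have T1T1': "T1 < T1'" unfolding T1_def T1'_def using c0 k0 by (simp add: field_simps)
  have T1'c: "T1' < -1 + c^2"
  proof -
    have "c/(2*k) = c^3/200" unfolding k_def using c0 by (simp add: field_simps power2_eq_square power3_eq_cube)
    also have "\<dots> < c^2" using c0 c1 by (simp add: power3_eq_cube power2_eq_square field_simps)
    finally show ?thesis unfolding T1'_def by simp
  qed
  define h where "h = (hb B0 a k :: (real^'n) \<times> real \<Rightarrow> real)"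
  define g where "g = (\<lambda>p::(real^'n) \<times> real. G1 * max 0 (min 1 ((T1' - snd p) / (T1' - T1)))
                        * max 0 (min 1 ((c/2 - norm (fst p)) / (c/4))))"
  have Lam00: "Lam0 > 0"
  proof -
    have "eta (1*1) \<le> Lam0 * eta 1 * eta 1" using etamult[rule_format, of 1 1] by simp
    then have "eta 1 \<le> Lam0 * eta 1 * eta 1" by simp
    moreover have e1: "eta 1 \<ge> 1" using etapos by simp
    show ?thesis
    proof (rule ccontr)
      assume "\<not> Lam0 > 0"
      then have "Lam0 * eta 1 \<le> 0" using e1 by (simp add: mult_nonpos_nonneg)
      then have "Lam0 * eta 1 * eta 1 \<le> 0" using e1 by (simp add: mult_nonpos_nonneg)
      then show False using calculation e1 by simp
    qed
  qed
  obtain T where T: "\<forall>t\<ge>T. eta t \<le> (kap0 / Lam0) * t"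
    using eta_sublinear[OF etapos etadiff etalim] kap00 Lam00 by (meson divide_pos_pos)
  define r0 where "r0 = 1 / max T 1"
  have r00: "r0 > 0" unfolding r0_def by simp
  have hle0: "h p \<le> 0" for p
    unfolding h_def hb_def Bf_def using B00 Pf_nonneg by (simp add: mult_nonneg_nonneg)
  show ?thesis
  proof (rule exI[of _ r0], rule conjI[OF r00], rule exI[of _ h], intro conjI)
    show "\<exists>L. L-lipschitz_on (Q1 \<union> parab_bdry) h"
    proof
      have L: "(B0*(a + 4*k + 4*n))-lipschitz_on (cball 0 n \<times> {-1..0}) h"
        unfolding h_def by (rule hb_lipschitz) (use a0 B00 k0 n1 in auto)
      have sub: "Q1 \<union> parab_bdry \<subseteq> cball (0::real^'n) n \<times> {-1..0}"
      proof
        fix p :: "(real^'n) \<times> real" assume p: "p \<in> Q1 \<union> parab_bdry"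
        obtain x t where pxt: "p = (x,t)" by (cases p)
        have "linf x \<le> 1 \<and> -1 \<le> t \<and> t \<le> 0" using p pxt unfolding Q1_def parab_bdry_def by auto
        moreover have "norm x \<le> n * linf x" unfolding n_def by (rule norm_le_linf)
        moreover have "n * linf x \<le> n * 1" using calculation n1 by (intro mult_left_mono) auto
        ultimately have "norm x \<le> n" by linarith
        then show "p \<in> cball 0 n \<times> {-1..0}" using pxt \<open>linf x \<le> 1 \<and> -1 \<le> t \<and> t \<le> 0\<close> by simp
      qed
      show "(B0*(a + 4*k + 4*n))-lipschitz_on (Q1 \<union> parab_bdry) h"
        by (rule lipschitz_on_subset[OF L sub])
    qed
    show "\<forall>p\<in>Q1. h p \<le> 0" using hle0 by simp
    show "C2x_on {p \<in> Q1. h p < 0} h"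
      unfolding C2x_on_def
    proof (intro exI conjI)
      let ?Dh = "\<lambda>p::(real^'n) \<times> real. (4 * Bf B0 a (snd p) * ((rhof k (snd p))^2 - fst p \<bullet> fst p)) *\<^sub>R fst p"
      let ?D2h = "\<lambda>p::(real^'n) \<times> real. Hm (Bf B0 a (snd p)) ((rhof k (snd p))^2 - fst p \<bullet> fst p) (fst p)"
      show "continuous_on {p \<in> Q1. h p < 0} ?Dh"
        unfolding Bf_def rhof_def by (intro continuous_intros)
      have "continuous_on UNIV ?D2h"
        unfolding Hm_def Bf_def rhof_def
      proof (intro continuous_on_vec_lambda)
        fix i j :: 'n
        show "continuous_on UNIV (\<lambda>p::(real^'n) \<times> real. 4 * (B0 * exp (- (a * (snd p + 1)))) *
           ((if i = j then (9 / 10 * (1 - exp (- (k * (snd p + 1)))))\<^sup>2 - fst p \<bullet> fst p else 0) -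
            2 * fst p $ i * fst p $ j))"
          by (cases "i = j") (auto intro!: continuous_intros)
      qed
      then show "continuous_on {p \<in> Q1. h p < 0} ?D2h" by (rule continuous_on_subset) simp
      show "\<forall>(x, t)\<in>{p \<in> Q1. h p < 0}. ((\<lambda>y. h (y, t)) has_derivative (\<lambda>v. ?Dh (x, t) \<bullet> v)) (at x) \<and>
          ((\<lambda>y. ?Dh (y, t)) has_derivative (\<lambda>v. ?D2h (x, t) *v v)) (at x)"
      proof (intro ballI, clarify)
        fix x t assume "(x,t) \<in> Q1" "h (x,t) < 0"
        then have "Pf ((rhof k t)^2 - x \<bullet> x) \<noteq> 0" unfolding h_def hb_def by auto
        then have q: "(rhof k t)^2 - x \<bullet> x > 0" using Pf_nonpos[of "(rhof k t)^2 - x \<bullet> x"] by linarith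
        show "((\<lambda>y. h (y, t)) has_derivative (\<lambda>v. ?Dh (x, t) \<bullet> v)) (at x) \<and>
          ((\<lambda>y. ?Dh (y, t)) has_derivative (\<lambda>v. ?D2h (x, t) *v v)) (at x)"
        proof
          show "((\<lambda>y. h (y, t)) has_derivative (\<lambda>v. ?Dh (x, t) \<bullet> v)) (at x)"
            using hb_x_deriv[of B0 a k t x] q unfolding h_def by simp
          show "((\<lambda>y. ?Dh (y, t)) has_derivative (\<lambda>v. ?D2h (x, t) *v v)) (at x)"
            using Dh_deriv[of "Bf B0 a t" "(rhof k t)^2" x] by simp
        qed
      qed
    qed
    show "\<forall>p\<in>K3. h p \<le> -2"
    proof
      fix p :: "(real^'n) \<times> real" assume p: "p \<in> K3"
      obtain x t where pxt: "p = (x,t)" by (cases p)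
      have xi0: "\<forall>i. -3*c < x $ i \<and> x $ i < 3*c" and t: "-1 + c^2 < t" "t < 0"
        using p pxt unfolding K3_def c_def by auto
      have xi: "\<forall>i. \<bar>x $ i\<bar> \<le> 3*c"
      proof
        fix i show "\<bar>x $ i\<bar> \<le> 3*c" using xi0[rule_format, of i] by linarith
      qed
      have "x \<bullet> x \<le> n * (3*c)^2" unfolding n_def by (rule inner_le_linf[OF xi])
      also have "\<dots> = 9 * c * (n * c)" by (simp add: power2_eq_square algebra_simps)
      also have "\<dots> = 9 * c / 10" unfolding nc by simp
      also have "\<dots> \<le> 9/100" using c1 by simp
      finally have xx: "x \<bullet> x \<le> 9/100" .
      have "k * (t+1) \<ge> k * c^2" using t k0 by (intro mult_left_mono) auto
      then have kt: "k * (t+1) \<ge> 100" using kc2 by simp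
      have "exp (-(k*(t+1))) \<le> exp (-100)" using kt by simp
      also have "\<dots> \<le> 1 / (1 + 100)" by (rule exp_neg_le_recip) simp
      finally have e: "exp (-(k*(t+1))) \<le> 1/101" by simp
      have r: "rhof k t \<ge> 90/101" unfolding rhof_def using e by simp
      have "(90/101)^2 \<le> (rhof k t)^2" using r by (intro power_mono) auto
      then have r2: "(rhof k t)^2 \<ge> 79/100" by (simp add: power2_eq_square)
      define q where "q = (rhof k t)^2 - x \<bullet> x"
      have q7: "q \<ge> 7/10" unfolding q_def using r2 xx by simp
      then have "Pf q = q^2" by (simp add: Pf_pos)
      moreover have "(7/10)^2 \<le> q^2" using q7 by (intro power_mono) auto
      ultimately have P: "Pf q \<ge> 49/100" by (simp add: power2_eq_square)
      have "a * (t + 1) \<le> a * 1" using a0 t by (intro mult_left_mono) auto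
      then have "exp (-a) \<le> exp (-(a*(t+1)))" by simp
      then have "B0 * exp (-a) \<le> Bf B0 a t" unfolding Bf_def using B00 by simp
      moreover have "B0 * exp (-a) = 5" unfolding B0_def by (simp add: exp_minus)
      ultimately have B5: "Bf B0 a t \<ge> 5" by simp
      have "5 * (49/100) \<le> Bf B0 a t * Pf q" using B5 P by (intro mult_mono) auto
      then show "h p \<le> -2" unfolding h_def hb_def pxt q_def by simp
    qed
    show "\<forall>p\<in>parab_bdry. h p = 0"
    proof
      fix p :: "(real^'n) \<times> real" assume p: "p \<in> parab_bdry"
      obtain x t where pxt: "p = (x,t)" by (cases p)
      have "(rhof k t)^2 - x \<bullet> x \<le> 0"
      proof (cases "t = -1")
        case True
        then have "rhof k t = 0" unfolding rhof_def by simp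
        then show ?thesis by simp
      next
        case False
        then have lx: "linf x = 1" and t: "-1 \<le> t" using p pxt unfolding parab_bdry_def by auto
        obtain i where i: "linf x = \<bar>x $ i\<bar>" using linf_attained by blast
        have "1 = (x$i)^2" using lx i by (metis abs_power2 power2_eq_1_iff abs_eq_iff one_power2 power2_abs)
        also have "\<dots> \<le> (\<Sum>j\<in>UNIV. (x$j)^2)" by (rule member_le_sum) auto
        also have "\<dots> = x \<bullet> x" by (simp add: inner_vec_def power2_eq_square)
        finally have xx: "1 \<le> x \<bullet> x" .
        have "0 \<le> rhof k t" "rhof k t \<le> 9/10" using rhof_bounds[OF _ t] k0 by auto
        then have "(rhof k t)^2 \<le> 1" by (simp add: power_le_one)
        then show ?thesis using xx by simp
      qed
      then show "h p = 0" unfolding h_def hb_def pxt by (simp add: Pf_nonpos)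
    qed
    show "\<forall>r. 0 < r \<and> r \<le> r0 \<longrightarrow>
              (\<exists>g. continuous_on Q1 g \<and> bounded (g ` Q1) \<and>
                   Q1 \<inter> closure {p\<in>Q1. g p \<noteq> 0} \<subseteq> K1 \<and>
                   visc_ineq lam Lam (\<lambda>s. Lam0 * r * eta (1/r) * phi s) h g)"
    proof (intro allI impI)
      fix r :: real assume r: "0 < r \<and> r \<le> r0"
      define \<kappa> where "\<kappa> = Lam0 * r * eta (1/r)"
      have er: "eta (1/r) \<ge> 1" using etapos r by simp
      have \<kappa>0: "\<kappa> \<ge> 0" unfolding \<kappa>_def using Lam00 r er by simp
      have \<kappa>le: "\<kappa> \<le> kap0"
      proof -
        have "1/r \<ge> 1/r0" using r r00 by (simp add: frac_le)
        moreover have "1/r0 = max T 1" unfolding r0_def by simp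
        ultimately have "1/r \<ge> T" by simp
        then have "eta (1/r) \<le> (kap0 / Lam0) * (1/r)" using T by blast
        then have "Lam0 * r * eta (1/r) \<le> Lam0 * r * ((kap0 / Lam0) * (1/r))"
          using Lam00 r by (intro mult_left_mono) auto
        also have "\<dots> = kap0" using Lam00 r by simp
        finally show ?thesis unfolding \<kappa>_def .
      qed
      have gb: "0 \<le> g p \<and> g p \<le> G1" for p
      proof -
        let ?s1 = "max 0 (min 1 ((T1' - snd p) / (T1' - T1)))"
        let ?s2 = "max 0 (min 1 ((c/2 - norm (fst p)) / (c/4)))"
        have "0 \<le> ?s1" "?s1 \<le> 1" "0 \<le> ?s2" "?s2 \<le> 1" by auto
        then have s12: "0 \<le> ?s1 * ?s2" "?s1 * ?s2 \<le> 1" by (auto simp: mult_le_one)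
        have "0 \<le> G1 * (?s1 * ?s2)" using G10 s12 by simp
        moreover have "G1 * (?s1 * ?s2) \<le> G1 * 1" by (rule mult_left_mono[OF s12(2) G10])
        ultimately show ?thesis unfolding g_def by (simp add: mult.assoc)
      qed
      show "\<exists>g. continuous_on Q1 g \<and> bounded (g ` Q1) \<and>
                   Q1 \<inter> closure {p\<in>Q1. g p \<noteq> 0} \<subseteq> K1 \<and>
                   visc_ineq lam Lam (\<lambda>s. Lam0 * r * eta (1/r) * phi s) h g"
      proof (intro exI[of _ g] conjI)
        show "continuous_on Q1 g" unfolding g_def by (intro continuous_intros) (use T1T1' c0 in auto)
        show "bounded (g ` Q1)" unfolding bounded_iff using gb by (intro exI[of _ G1]) auto
        show "Q1 \<inter> closure {p\<in>Q1. g p \<noteq> 0} \<subseteq> K1"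
        proof -
          define Z where "Z = {p::(real^'n) \<times> real. norm (fst p) \<le> c/2} \<inter> {p. snd p \<le> T1'}"
          have sub: "{p\<in>Q1. g p \<noteq> 0} \<subseteq> Z"
          proof
            fix p :: "(real^'n) \<times> real" assume "p \<in> {p\<in>Q1. g p \<noteq> 0}"
            then have gp: "g p \<noteq> 0" by simp
            have "norm (fst p) \<le> c/2"
            proof (rule ccontr)
              assume "\<not> norm (fst p) \<le> c/2"
              then have "(c/2 - norm (fst p)) / (c/4) < 0" using c0 by (simp add: divide_neg_pos)
              then have "max 0 (min 1 ((c/2 - norm (fst p)) / (c/4))) = 0" by simp
              then show False using gp unfolding g_def by simp
            qed
            moreover have "snd p \<le> T1'"
            proof (rule ccontr)
              assume "\<not> snd p \<le> T1'"
              then have "(T1' - snd p) / (T1' - T1) < 0" using T1T1' by (simp add: divide_neg_pos)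
              then have "max 0 (min 1 ((T1' - snd p) / (T1' - T1))) = 0" by simp
              then show False using gp unfolding g_def by simp
            qed
            ultimately show "p \<in> Z" unfolding Z_def by simp
          qed
          have "closed Z" unfolding Z_def
            by (intro closed_Int closed_Collect_le continuous_intros)
          then have "closure {p\<in>Q1. g p \<noteq> 0} \<subseteq> Z" using sub by (rule closure_minimal[rotated])
          moreover have "Q1 \<inter> Z \<subseteq> K1"
          proof
            fix p :: "(real^'n) \<times> real" assume p: "p \<in> Q1 \<inter> Z"
            obtain x t where pxt: "p = (x,t)" by (cases p)
            have x: "norm x \<le> c/2" and t: "t \<le> T1'" "-1 < t" using p pxt unfolding Z_def Q1_def by auto
            have "\<forall>i. - c < x $ i \<and> x $ i < c"
            proof
              fix i
              have "\<bar>x $ i\<bar> \<le> norm x" by (rule component_le_norm_cart)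
              then have "\<bar>x $ i\<bar> < c" using x c0 by linarith
              then show "- c < x $ i \<and> x $ i < c" by linarith
            qed
            moreover have "t < -1 + c^2" using t T1'c by linarith
            ultimately show "p \<in> K1" unfolding K1_def pxt c_def using t by simp
          qed
          ultimately show ?thesis by blast
        qed
        show "visc_ineq lam Lam (\<lambda>s. Lam0 * r * eta (1/r) * phi s) h g"
          unfolding visc_ineq_def
        proof (intro ballI allI impI)
          fix p0 :: "(real^'n) \<times> real" and \<theta> :: "(real^'n) \<times> real \<Rightarrow> real"
            and G :: "(real^'n) \<times> real \<Rightarrow> (real^'n) \<times> real" and G'
          assume p0: "p0 \<in> Q1"
          assume HH: "(\<exists>U. open U \<and> p0 \<in> U \<and> U \<subseteq> Q1 \<and>
              (\<forall>q\<in>U. (\<theta> has_derivative (\<lambda>v. G q \<bullet> v)) (at q) \<and> (G has_derivative G' q) (at q)) \<and>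
              (\<forall>v. continuous_on U (\<lambda>q. G' q v)) \<and> (\<forall>q\<in>U. \<theta> q \<le> h q)) \<and> \<theta> p0 = h p0"
          then obtain U where U: "open U" "p0 \<in> U"
            and d\<theta>: "\<forall>q\<in>U. (\<theta> has_derivative (\<lambda>v. G q \<bullet> v)) (at q) \<and> (G has_derivative G' q) (at q)"
            and le: "\<forall>q\<in>U. \<theta> q \<le> h q" by blast
          have eq: "\<theta> p0 = h p0" using HH by blast
          obtain x0 t0 where p0xt: "p0 = (x0,t0)" by (cases p0)
          have t0: "-1 < t0" "t0 < 0" using p0 p0xt unfolding Q1_def by auto
          let ?M = "\<chi> i j. fst (G' p0 (axis j 1, 0)) $ i"
          have gp0: "0 \<le> g p0" using gb by blast
          have phi0: "phi 0 = 0" using phidef by simp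
          define b where "b = Bf B0 a t0"
          define \<rho> where "\<rho> = rhof k t0"
          define \<rho>d where "\<rho>d = rhod k t0"
          define s0 where "s0 = x0 \<bullet> x0"
          define q0 where "q0 = \<rho>^2 - s0"
          have bb: "0 \<le> b" "b \<le> B0" using Bf_bounds[OF a0 _, of B0 t0] B00 t0 unfolding b_def by auto
          have \<rho>b: "0 \<le> \<rho>" "\<rho> \<le> 9/10" using rhof_bounds[OF _, of k t0] k0 t0 unfolding \<rho>_def by auto
          have \<rho>db: "0 \<le> \<rho>d" "\<rho>d \<le> k" using rhod_bounds[OF _, of k t0] k0 t0 unfolding \<rho>d_def by auto
          have s00: "s0 \<ge> 0" unfolding s0_def by simp
          show "pucci_max lam Lam ?M - snd (G p0) + Lam0 * r * eta (1 / r) * phi (norm (fst (G p0))) \<le> g p0"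
          proof (cases "q0 > 0")
            case False
            have hp0: "h p0 = 0" using False unfolding h_def hb_def p0xt q0_def s0_def \<rho>_def by (simp add: Pf_nonpos)
            have vp: "fst (G (x0,t0)) = 0" "snd (G (x0,t0)) = 0"
              "\<forall>u. u \<bullet> (?M *v u) \<le> u \<bullet> ((0::real^'n^'n) *v u)"
            proof -
              have le0: "\<forall>q\<in>U. \<theta> q \<le> (\<lambda>_. 0) q" using le hle0 by (metis order_trans)
              have eq0: "\<theta> (x0,t0) = (\<lambda>_. 0) (x0,t0)" using eq hp0 p0xt by simp
              have dh0: "\<forall>y\<in>UNIV. ((\<lambda>y. (\<lambda>_. (0::real)) (y,t0)) has_derivative (\<lambda>v. (\<lambda>_. 0::real^'n) y \<bullet> v)) (at y)"
                by simp
              have dDh0: "((\<lambda>_. 0::real^'n) has_derivative (\<lambda>v. (0::real^'n^'n) *v v)) (at x0)" by simp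
              have dht0: "((\<lambda>\<tau>. (\<lambda>_. (0::real)) (x0,\<tau>)) has_real_derivative 0) (at t0)" by simp
              note V0 = visc_point[OF U[unfolded p0xt] d\<theta> le0 eq0 open_UNIV UNIV_I dh0 dDh0 dht0]
              show "fst (G (x0,t0)) = 0" using V0(1) by simp
              show "snd (G (x0,t0)) = 0" using V0(2) by simp
              show "\<forall>u. u \<bullet> (?M *v u) \<le> u \<bullet> ((0::real^'n^'n) *v u)" using V0(3) p0xt by simp
            qed
            have "pucci_max lam Lam ?M \<le> Lam * CARD('n) * 0 + lam * 0"
              by (rule pucci_bound) (use lam Lam vp(3) in auto)
            then show ?thesis using vp p0xt phi0 gp0 by simp
          next
            case True
            have q00: "q0 > 0" using True .
            have Pq: "Pf q0 = q0^2" using q00 by (simp add: Pf_pos)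
            have mq: "max 0 q0 = q0" using q00 by simp
            have q01: "q0 \<le> 1"
            proof -
              have "\<rho>^2 \<le> 1" using \<rho>b by (simp add: power_le_one)
              then show ?thesis unfolding q0_def using s00 by linarith
            qed
            have nx: "norm x0 < \<rho>"
            proof -
              have "(norm x0)^2 < \<rho>^2" using q00 unfolding q0_def s0_def by (simp add: power2_norm_eq_inner)
              then show ?thesis using \<rho>b(1) by (rule power2_less_imp_less)
            qed
            define V where "V = {y::real^'n. 0 < \<rho>^2 - y \<bullet> y}"
            have V: "open V" "x0 \<in> V"
            proof -
              show "open V" unfolding V_def by (intro open_Collect_less continuous_intros)
              show "x0 \<in> V" unfolding V_def using q00 unfolding q0_def s0_def by simp
            qed
            define Dh where "Dh = (\<lambda>y::real^'n. (4*b*(\<rho>^2 - y \<bullet> y)) *\<^sub>R y)"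
            define H where "H = Hm b q0 x0"
            define ht where "ht = a * b * Pf q0 - b * (2 * max 0 q0) * (2 * \<rho> * \<rho>d)"
            have dh: "\<forall>y\<in>V. ((\<lambda>y. h (y,t0)) has_derivative (\<lambda>v. Dh y \<bullet> v)) (at y)"
            proof
              fix y assume "y \<in> V"
              then have "max 0 (\<rho>^2 - y \<bullet> y) = \<rho>^2 - y \<bullet> y" unfolding V_def by simp
              then show "((\<lambda>y. h (y,t0)) has_derivative (\<lambda>v. Dh y \<bullet> v)) (at y)"
                using hb_x_deriv[of B0 a k t0 y] unfolding h_def Dh_def b_def \<rho>_def by simp
            qed
            have dDh: "(Dh has_derivative (\<lambda>v. H *v v)) (at x0)"
              unfolding Dh_def H_def q0_def s0_def by (rule Dh_deriv)
            have dht: "((\<lambda>\<tau>. h (x0,\<tau>)) has_real_derivative ht) (at t0)"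
              using hb_t_deriv[of B0 a k x0 t0] unfolding h_def ht_def b_def \<rho>_def \<rho>d_def q0_def s0_def .
            note VP = visc_point[OF U[unfolded p0xt] d\<theta>[unfolded p0xt] le eq[unfolded p0xt] V dh dDh dht]
            have sym: "\<forall>i j. ?M $ i $ j = ?M $ j $ i" using VP(4) p0xt by simp
            have Mq: "\<forall>u. u \<bullet> (?M *v u) \<le> u \<bullet> (H *v u)" using VP(3) p0xt by simp
            have Hq: "u \<bullet> (H *v u) = 4*b*q0*(u \<bullet> u) - 8*b*(x0 \<bullet> u)^2" for u
              unfolding H_def by (rule Hm_quad)
            define m where "m = min 0 (4*b*(q0 - 2 * s0))"
            have P: "pucci_max lam Lam ?M \<le> Lam * CARD('n) * (4*b*q0) + lam * m"
            proof (rule pucci_bound)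
              show "0 < lam" using lam .
              show "0 \<le> Lam" using Lam by simp
              show "0 \<le> 4*b*q0" using bb q00 by simp
              show "\<forall>u. u \<bullet> (?M *v u) \<le> 4*b*q0 * (u \<bullet> u)"
              proof
                fix u :: "real^'n"
                have "0 \<le> 8*b*(x0 \<bullet> u)^2" using bb by simp
                then show "u \<bullet> (?M *v u) \<le> 4*b*q0 * (u \<bullet> u)" using Mq[rule_format, of u] Hq[of u] by linarith
              qed
              show "m \<le> 0" unfolding m_def by simp
              show "m < 0 \<longrightarrow> (\<exists>e. poly (charpoly ?M) e = 0 \<and> e \<le> m)"
              proof
                assume m0': "m < 0"
                then have mm: "m = 4*b*(q0 - 2 * s0)" unfolding m_def by simp
                have x00: "x0 \<noteq> 0"
                proof
                  assume "x0 = 0"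
                  then have "s0 = 0" unfolding s0_def by simp
                  then have "m = min 0 (4*b*q0)" unfolding m_def by simp
                  then have "m = 0" using bb q00 by simp
                  then show False using m0' by simp
                qed
                have sp: "s0 > 0" using x00 unfolding s0_def by simp
                obtain e where e: "poly (charpoly ?M) e = 0" "e \<le> (x0 \<bullet> (?M *v x0)) / (x0 \<bullet> x0)"
                  using min_eigen[OF sym x00] by blast
                have "x0 \<bullet> (?M *v x0) \<le> 4*b*q0 * s0 - 8*b * s0^2"
                  using Mq[rule_format, of x0] Hq[of x0] unfolding s0_def by simp
                then have "(x0 \<bullet> (?M *v x0)) / (x0 \<bullet> x0) \<le> (4*b*q0 * s0 - 8*b * s0^2) / s0"
                  using sp unfolding s0_def by (simp add: divide_right_mono)
                also have "\<dots> = m" unfolding mm using sp by (simp add: field_simps power2_eq_square)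
                finally show "\<exists>e. poly (charpoly ?M) e = 0 \<and> e \<le> m" using e by auto
              qed
            qed
            have fG: "fst (G p0) = Dh x0" using VP(1) p0xt by simp
            have sG: "snd (G p0) = a*b*q0^2 - 4*b*q0*(\<rho>*\<rho>d)"
              using VP(2) p0xt unfolding ht_def Pq mq by (simp add: algebra_simps)
            have nG: "norm (fst (G p0)) = 4*b*q0*norm x0"
              unfolding fG Dh_def q0_def[symmetric] s0_def[symmetric] using bb q00 by simp
            have phib: "\<kappa> * phi (norm (fst (G p0))) \<le> kap0 * phi (4*B0)"
            proof -
              have z0: "0 \<le> 4*b*q0*norm x0" using bb q00 by simp
              have "4*b*q0*norm x0 \<le> 4*B0*1*1"
              proof -
                have bq: "b*q0 \<le> B0*1" using bb q00 q01 by (intro mult_mono) auto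
                have nx1: "norm x0 \<le> 1" using nx \<rho>b by linarith
                have "(b*q0)*norm x0 \<le> (B0*1)*1" by (rule mult_mono[OF bq nx1]) (use B00 in auto)
                then show ?thesis by simp
              qed
              then have "phi (4*b*q0*norm x0) \<le> phi (4*B0)"
                using strict_mono_on_leD[OF phimono] z0 by simp
              moreover have "0 \<le> phi (4*b*q0*norm x0)" using phige z0 by (meson order_trans)
              ultimately show ?thesis unfolding nG using \<kappa>le \<kappa>0 phiB by (intro mult_mono) auto
            qed
            have rr: "\<rho>*\<rho>d \<le> k"
            proof -
              have "\<rho>*\<rho>d \<le> 1*k" using \<rho>b \<rho>db by (intro mult_mono) auto
              then show ?thesis by simp
            qed
            have rr0: "0 \<le> \<rho>*\<rho>d" using \<rho>b \<rho>db by simp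
            have main: "Lam * n * (4*b*q0) + lam * m - (a*b*q0^2 - 4*b*q0*(\<rho>*\<rho>d)) + kap0 * phi (4*B0) \<le> g p0"
            proof (cases "t0 \<le> T1")
              case True
              have "\<rho> \<le> 9/10 * (k * (t0+1))" unfolding \<rho>_def using rhof_upper k0 t0 by simp
              also have "k * (t0+1) \<le> k * (T1+1)" using True k0 by (intro mult_left_mono) auto
              also have "k * (T1+1) = c/4" unfolding T1_def using k0 by simp
              finally have "\<rho> \<le> 9/10 * (c/4)" by simp
              then have nxc: "norm x0 \<le> c/4" using nx c0 by linarith
              have s2: "max 0 (min 1 ((c/2 - norm x0) / (c/4))) = 1"
              proof -
                have "(c/2 - norm x0) / (c/4) \<ge> 1" using nxc c0 by (simp add: field_simps)
                then show ?thesis by simp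
              qed
              have s1: "max 0 (min 1 ((T1' - t0) / (T1' - T1))) = 1"
              proof -
                have "(T1' - t0) / (T1' - T1) \<ge> 1" using True T1T1' by (simp add: field_simps)
                then show ?thesis by simp
              qed
              have gG: "g p0 = G1" unfolding g_def p0xt using s1 s2 by simp
              have m0: "lam * m \<le> 0" unfolding m_def using lam by (simp add: mult_nonneg_nonpos)
              have aq: "0 \<le> a*b*q0^2" using a0 bb by simp
              have "Lam * n * (4*b*q0) + 4*b*q0*(\<rho>*\<rho>d) = (4*b*q0) * (Lam*n + \<rho>*\<rho>d)"
                by (simp add: algebra_simps)
              also have "\<dots> \<le> (4*B0) * (Lam*n + k)"
              proof (rule mult_mono)
                show "4*b*q0 \<le> 4*B0" using bb q00 q01 mult_mono[of b B0 q0 1] by simp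
                show "Lam*n + \<rho>*\<rho>d \<le> Lam*n + k" using rr by simp
                show "0 \<le> 4*B0" using B00 by simp
                show "0 \<le> Lam*n + \<rho>*\<rho>d" using Lam n1 rr0 by simp
              qed
              finally have "Lam * n * (4*b*q0) + 4*b*q0*(\<rho>*\<rho>d) \<le> 4*B0*(Lam*n + k)" by simp
              then show ?thesis unfolding gG G1_def using m0 aq by linarith
            next
              case False
              have kt: "k * (t0+1) \<ge> c/4"
              proof -
                have "k * (t0+1) \<ge> k * (T1+1)" using False k0 by (intro mult_left_mono) auto
                moreover have "k * (T1+1) = c/4" unfolding T1_def using k0 by simp
                ultimately show ?thesis by simp
              qed
              have \<rho>1: "rho1 \<le> \<rho>" unfolding \<rho>_def rho1_def
                by (rule rhof_lower[OF c0 _ k0 kt]) (use c1 in simp)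
              have BA: "Lam*n*(4*b*q0) + lam * min 0 (4*b*(q0 - 2 * s0)) - (a*b*q0^2 - 4*b*q0*(\<rho>*\<rho>d))
                  \<le> - b * min (2*rho1^2/3) (4*lam*rho1^2)"
                by (rule barrier_arith[OF lam _ _ _ rho10 \<rho>1 rr0 rr q00 s00 _ bb(1) a_def])
                   (use Lam n1 k0 in \<open>auto simp: q0_def\<close>)
              have "B0 * exp (-a) \<le> b"
              proof -
                have "a * (t0 + 1) \<le> a * 1" using a0 t0 by (intro mult_left_mono) auto
                then have "exp (-a) \<le> exp (-(a*(t0+1)))" by simp
                then show ?thesis unfolding b_def Bf_def using B00 by simp
              qed
              then have "kap0 * phi (4*B0) \<le> b * m0" unfolding kap0phi using m00 by (simp add: mult_right_mono)
              then have "Lam * n * (4*b*q0) + lam * m - (a*b*q0^2 - 4*b*q0*(\<rho>*\<rho>d)) + kap0 * phi (4*B0) \<le> 0"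
                using BA unfolding m_def m0_def by linarith
              then show ?thesis using gp0 by linarith
            qed
            have "pucci_max lam Lam ?M - snd (G p0) + \<kappa> * phi (norm (fst (G p0)))
                \<le> Lam * n * (4*b*q0) + lam * m - (a*b*q0^2 - 4*b*q0*(\<rho>*\<rho>d)) + kap0 * phi (4*B0)"
              using P sG phib unfolding n_def by linarith
            then show ?thesis using main unfolding \<kappa>_def by linarith
          qed
        qed
      qed
    qed
  qed
qed


end
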